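(* Let $u=u_1\cdots u_r$ be an allowed word of $\Sigma_A$ of length $r\ge2$, and let $$f_u(z)=\tilde\tau_u(z)\det(\mathbf I-zP)+z^{r-1}\delta_u\big(\operatorname{adj}(\mathbf I-zP)\big)_{u_ru_1}.$$ Let $z_0$ be the smallest positive real root of $f_u$. Then $\rho(C_u)=\ln z_0$.
   Context: Let $\Sigma=\{1,\dots,N\}$, $A$ an irreducible $N\times N$ $0$–$1$ matrix, $\Sigma_A=\{x\in\Sigma^{\mathbb N}:A_{x_nx_{n+1}}=1\ \forall n\}$ with left shift $\sigma$. A word is allowed if it occurs in some element of $\Sigma_A$; $C_u$ is the set of $x\in\Sigma_A$ beginning with $u$. $P$ is a row-stochastic matrix with $P_{ij}>0$ iff $A_{ij}=1$, $\mathbf p$ its stationary vector, $\mu=\mu_P$ the Markov measure $\mu(C_w)=p_{w_1}P_{w_1w_2}\cdots P_{w_{n-1}w_n}$. For a hole $H$, $\mathcal W_m=\{x:\sigma^ix\notin H,0\le i\le m\}$, $\rho(H)=-\lim_m\frac1m\ln\mu(\mathcal W_m)$. $\operatorname{adj}$ is the adjugate matrix. $\delta_u=P_{u_1u_2}\cdots P_{u_{r-1}u_r}$. Weighted autocorrelation: for $0\le s\le r-1$, $c_{s,u,u}=1$ if $u_{s+1}\cdots u_r=u_1\cdots u_{r-s}$ and $0$ otherwise; $\delta_{s,u,u}=\prod_{j=r-s}^{r-1}P_{u_ju_{j+1}}$ (empty product $=1$); $\tau_u(z)=\sum_{s=0}^{r-1}c_{s,u,u}\delta_{s,u,u}z^{s}$;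 and $\tilde\tau_u(z)=\tau_u(z)-z^{r-1}c_{r-1,u,u}\delta_u$. *)

theory Defs
  imports "Jordan_Normal_Form.Determinant"
begin

(* States are 0..N-1 (the paper's 1..N shifted); words are lists, 0-indexed. *)

definition zero_one_mat :: "nat \<Rightarrow> real mat \<Rightarrow> bool" where
  "zero_one_mat N A \<longleftrightarrow> A \<in> carrier_mat N N \<and> (\<forall>i<N. \<forall>j<N. A $$ (i,j) = 0 \<or> A $$ (i,j) = 1)"

definition irreducible_mat :: "nat \<Rightarrow> real mat \<Rightarrow> bool" where
  "irreducible_mat N A \<longleftrightarrow> (\<forall>i<N. \<forall>j<N. \<exists>n>0. (A ^\<^sub>m n) $$ (i,j) > 0)"

definition SigmaA :: "nat \<Rightarrow> real mat \<Rightarrow> (nat \<Rightarrow> nat) set" where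
  "SigmaA N A = {x. (\<forall>n. x n < N) \<and> (\<forall>n. A $$ (x n, x (Suc n)) = 1)}"

definition shift :: "(nat \<Rightarrow> nat) \<Rightarrow> (nat \<Rightarrow> nat)" where
  "shift x = (\<lambda>n. x (Suc n))"

definition allowed :: "nat \<Rightarrow> real mat \<Rightarrow> nat list \<Rightarrow> bool" where
  "allowed N A w \<longleftrightarrow> (\<exists>x\<in>SigmaA N A. \<exists>k. \<forall>i<length w. x (k + i) = w ! i)"

definition cyl :: "nat \<Rightarrow> real mat \<Rightarrow> nat list \<Rightarrow> (nat \<Rightarrow> nat) set" where
  "cyl N A w = {x \<in> SigmaA N A. \<forall>k<length w. x k = w ! k}"

definition row_stochastic_compatible :: "nat \<Rightarrow> real mat \<Rightarrow> real mat \<Rightarrow> bool" where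
  "row_stochastic_compatible N A P \<longleftrightarrow> P \<in> carrier_mat N N \<and>
     (\<forall>i<N. \<forall>j<N. P $$ (i,j) \<ge> 0) \<and>
     (\<forall>i<N. (\<Sum>j<N. P $$ (i,j)) = 1) \<and>
     (\<forall>i<N. \<forall>j<N. P $$ (i,j) > 0 \<longleftrightarrow> A $$ (i,j) = 1)"

definition stationary_vector :: "nat \<Rightarrow> real mat \<Rightarrow> (nat \<Rightarrow> real) \<Rightarrow> bool" where
  "stationary_vector N P p \<longleftrightarrow> (\<forall>i<N. p i \<ge> 0) \<and> (\<Sum>i<N. p i) = 1 \<and>
     (\<forall>j<N. (\<Sum>i<N. p i * P $$ (i,j)) = p j)"

definition markov_cyl :: "(nat \<Rightarrow> real) \<Rightarrow> real mat \<Rightarrow> nat list \<Rightarrow> real" where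
  "markov_cyl p P w = (if w = [] then 1 else
      p (hd w) * (\<Prod>j<length w - 1. P $$ (w ! j, w ! (j+1))))"

(* Markov measure of a set S that is a union of cylinders of length n:
   sum of mu(C_w) over the allowed words w of length n with C_w \<subseteq> S *)
definition markov_measure_lvl ::
  "nat \<Rightarrow> real mat \<Rightarrow> (nat \<Rightarrow> real) \<Rightarrow> real mat \<Rightarrow> nat \<Rightarrow> (nat \<Rightarrow> nat) set \<Rightarrow> real" where
  "markov_measure_lvl N A p P n S =
     (\<Sum>w\<in>{w. set w \<subseteq> {..<N} \<and> length w = n \<and> allowed N A w \<and> cyl N A w \<subseteq> S}. markov_cyl p P w)"

definition survivors :: "nat \<Rightarrow> real mat \<Rightarrow> (nat \<Rightarrow> nat) set \<Rightarrow> nat \<Rightarrow> (nat \<Rightarrow> nat) set" where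
  "survivors N A H m = {x \<in> SigmaA N A. \<forall>i\<le>m. (shift ^^ i) x \<notin> H}"

definition autocorr_c :: "nat list \<Rightarrow> nat \<Rightarrow> bool" where
  "autocorr_c u s \<longleftrightarrow> drop s u = take (length u - s) u"

(* delta_{s,u,u} = prod_{j=r-s}^{r-1} P_{u_j u_{j+1}} (1-based) *)
definition autocorr_delta :: "real mat \<Rightarrow> nat list \<Rightarrow> nat \<Rightarrow> real" where
  "autocorr_delta P u s = (\<Prod>j\<in>{length u - s..<length u}. P $$ (u ! (j-1), u ! j))"

definition word_delta :: "real mat \<Rightarrow> nat list \<Rightarrow> real" where
  "word_delta P u = (\<Prod>j\<in>{1..<length u}. P $$ (u ! (j-1), u ! j))"

definition tau :: "real mat \<Rightarrow> nat list \<Rightarrow> real \<Rightarrow> real" where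
  "tau P u z = (\<Sum>s<length u. (if autocorr_c u s then 1 else 0) * autocorr_delta P u s * z ^ s)"

definition tau_tilde :: "real mat \<Rightarrow> nat list \<Rightarrow> real \<Rightarrow> real" where
  "tau_tilde P u z = tau P u z
     - z ^ (length u - 1) * (if autocorr_c u (length u - 1) then 1 else 0) * word_delta P u"

definition f_u :: "nat \<Rightarrow> real mat \<Rightarrow> nat list \<Rightarrow> real \<Rightarrow> real" where
  "f_u N P u z = tau_tilde P u z * det (1\<^sub>m N - z \<cdot>\<^sub>m P)
     + z ^ (length u - 1) * word_delta P u * (adj_mat (1\<^sub>m N - z \<cdot>\<^sub>m P)) $$ (last u, hd u)"

end

theory Submission
  imports Defs
begin

fun pw :: "real mat \<Rightarrow> nat \<Rightarrow> nat list \<Rightarrow> real" where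
  "pw P i [] = 1"
| "pw P i (k#v) = P $$ (i,k) * pw P k v"

definition wt :: "(nat \<Rightarrow> real) \<Rightarrow> real mat \<Rightarrow> nat list \<Rightarrow> real" where
  "wt p P w = (case w of [] \<Rightarrow> 1 | i#v \<Rightarrow> p i * pw P i v)"

lemma pw_append: "pw P i (v1 @ v2) = pw P i v1 * pw P (last (i#v1)) v2"
  by (induction v1 arbitrary: i) auto

lemma pw_prod: "pw P i v = (\<Prod>j<length v. P $$ ((i#v)!j, v!j))"
proof (induction v arbitrary: i)
  case Nil then show ?case by simp
next
  case (Cons k v)
  show ?case unfolding pw.simps Cons
    by (simp add: prod.lessThan_Suc_shift del: prod.lessThan_Suc)
qed

lemma markov_cyl_wt: "markov_cyl p P w = wt p P w"
proof (cases w)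
  case Nil then show ?thesis by (simp add: markov_cyl_def wt_def)
next
  case (Cons i v)
  then show ?thesis by (simp add: markov_cyl_def wt_def pw_prod)
qed

lemma wt_snoc: "w \<noteq> [] \<Longrightarrow> wt p P (w @ [j]) = wt p P w * P $$ (last w, j)"
  by (cases w) (auto simp: wt_def pw_append)

lemma wt_append: "w \<noteq> [] \<Longrightarrow> wt p P (w @ v) = wt p P w * pw P (last w) v"
  by (cases w) (auto simp: wt_def pw_append)

locale hs =
  fixes N :: nat and A P :: "real mat" and p :: "nat \<Rightarrow> real" and u :: "nat list"
  assumes A01: "zero_one_mat N A" and Airr: "irreducible_mat N A"
    and Pst: "row_stochastic_compatible N A P" and pst: "stationary_vector N P p"
    and u_states: "set u \<subseteq> {..<N}" and u_allowed: "allowed N A u" and u_len: "length u \<ge> 2"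
begin

abbreviation r where "r \<equiv> length u"

definition occ :: "nat list \<Rightarrow> nat \<Rightarrow> bool" where
  "occ w i \<longleftrightarrow> i + r \<le> length w \<and> take r (drop i w) = u"
definition avoid :: "nat list \<Rightarrow> bool" where "avoid w \<longleftrightarrow> (\<forall>i. \<not> occ w i)"
definition W :: "nat \<Rightarrow> nat list set" where "W n = {w. set w \<subseteq> {..<N} \<and> length w = n}"
definition sA :: "nat \<Rightarrow> real" where "sA n = (\<Sum>w\<in>{w\<in>W n. avoid w}. wt p P w)"
definition a :: "nat \<Rightarrow> nat \<Rightarrow> real" where
  "a n j = (\<Sum>w\<in>{w\<in>W n. avoid w \<and> last w = j}. wt p P w)"
definition Tset :: "nat \<Rightarrow> nat list set" where
  "Tset n = {w\<in>W n. avoid (butlast w) \<and> occ w (n - r)}"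
definition t :: "nat \<Rightarrow> real" where "t n = (\<Sum>w\<in>Tset n. wt p P w)"

lemma P_carrier: "P \<in> carrier_mat N N" using Pst unfolding row_stochastic_compatible_def by auto
lemma P_nonneg: "i < N \<Longrightarrow> j < N \<Longrightarrow> P $$ (i,j) \<ge> 0"
  using Pst unfolding row_stochastic_compatible_def by auto
lemma P_rowsum: "i < N \<Longrightarrow> (\<Sum>j<N. P $$ (i,j)) = 1"
  using Pst unfolding row_stochastic_compatible_def by auto
lemma P_pos_iff: "i < N \<Longrightarrow> j < N \<Longrightarrow> P $$ (i,j) > 0 \<longleftrightarrow> A $$ (i,j) = 1"
  using Pst unfolding row_stochastic_compatible_def by auto
lemma p_nonneg: "i < N \<Longrightarrow> p i \<ge> 0" using pst unfolding stationary_vector_def by auto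
lemma p_sum: "(\<Sum>i<N. p i) = 1" using pst unfolding stationary_vector_def by auto
lemma p_stat: "j < N \<Longrightarrow> (\<Sum>i<N. p i * P $$ (i,j)) = p j"
  using pst unfolding stationary_vector_def by auto
lemma A_01: "i < N \<Longrightarrow> j < N \<Longrightarrow> A $$ (i,j) = 0 \<or> A $$ (i,j) = 1"
  using A01 unfolding zero_one_mat_def by auto
lemma A_carrier: "A \<in> carrier_mat N N" using A01 unfolding zero_one_mat_def by auto

lemma finite_W[simp]: "finite (W n)"
  unfolding W_def by (rule finite_lists_length_eq) auto

lemma pw_nonneg: "i < N \<Longrightarrow> set v \<subseteq> {..<N} \<Longrightarrow> pw P i v \<ge> 0"
  by (induction v arbitrary: i) (auto intro!: mult_nonneg_nonneg P_nonneg)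

lemma wt_nonneg: "set w \<subseteq> {..<N} \<Longrightarrow> wt p P w \<ge> 0"
  by (cases w) (auto simp: wt_def intro!: mult_nonneg_nonneg p_nonneg pw_nonneg)

lemma sA_nonneg: "sA n \<ge> 0" unfolding sA_def W_def by (auto intro!: sum_nonneg wt_nonneg)
lemma a_nonneg: "a n j \<ge> 0" unfolding a_def W_def by (auto intro!: sum_nonneg wt_nonneg)
lemma t_nonneg: "t n \<ge> 0" unfolding t_def Tset_def W_def by (auto intro!: sum_nonneg wt_nonneg)

lemma r_ge2: "r \<ge> 2" using u_len .

lemma occ_take: "occ (take m w) i \<longleftrightarrow> occ w i \<and> i + r \<le> m"
  unfolding occ_def by (auto simp: drop_take min_def)

lemma occ_butlast: "occ (butlast w) i \<longleftrightarrow> occ w i \<and> i + r < length w"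
  using occ_take[of "length w - 1" w i] r_ge2 by (auto simp: butlast_conv_take occ_def)

lemma occ_append_left: "i + r \<le> length w \<Longrightarrow> occ (w @ v) i \<longleftrightarrow> occ w i"
  using occ_take[of "length w" "w @ v" i] by auto

lemma avoid_take: "avoid w \<Longrightarrow> avoid (take m w)"
  unfolding avoid_def using occ_take by auto

lemma avoid_butlast: "avoid w \<Longrightarrow> avoid (butlast w)"
  unfolding avoid_def using occ_butlast by auto

lemma avoid_short: "length w < r \<Longrightarrow> avoid w"
  unfolding avoid_def occ_def by auto

lemma occ_end_last: "occ w (length w - r) \<Longrightarrow> last w = last u"
proof -
  assume h: "occ w (length w - r)"
  then have "r \<le> length w" unfolding occ_def by auto
  then have "drop (length w - r) w = u" using h unfolding occ_def by auto
  moreover have "last (drop (length w - r) w) = last w"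
    using \<open>r \<le> length w\<close> r_ge2 by (simp add: last_drop)
  ultimately show ?thesis by simp
qed

lemma not_avoid_butlast: "avoid (butlast w) \<Longrightarrow> \<not> avoid w \<Longrightarrow> occ w (length w - r)"
proof -
  assume h1: "avoid (butlast w)" and h2: "\<not> avoid w"
  then obtain i where i: "occ w i" unfolding avoid_def by auto
  have "\<not> (i + r < length w)" using h1 i occ_butlast unfolding avoid_def by auto
  with i have "i = length w - r" unfolding occ_def by auto
  with i show ?thesis by simp
qed

lemma W_Suc_snoc_last: "w \<in> W (Suc n) \<Longrightarrow> butlast w \<in> W n \<and> last w < N \<and> w = butlast w @ [last w]"
proof -
  assume "w \<in> W (Suc n)"
  then have w: "set w \<subseteq> {..<N}" "length w = Suc n" unfolding W_def by auto
  then have "w \<noteq> []" by auto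
  then have "w = butlast w @ [last w]" by simp
  moreover have "last w \<in> set w" using \<open>w \<noteq> []\<close> by simp
  moreover have "set (butlast w) \<subseteq> set w" by (meson in_set_butlastD subsetI)
  ultimately show ?thesis using w unfolding W_def by auto
qed

lemma rec_i:
  assumes n: "n \<ge> 1" and j: "j < N"
  shows "(\<Sum>i<N. a n i * P $$ (i,j)) = a (Suc n) j + (if j = last u then t (Suc n) else 0)"
proof -
  let ?S = "{w\<in>W n. avoid w}"
  have "(\<Sum>i<N. a n i * P $$ (i,j)) = (\<Sum>i<N. \<Sum>w\<in>{x\<in>?S. last x = i}. wt p P w * P $$ (last w, j))"
    unfolding a_def by (auto simp: sum_distrib_right intro!: sum.cong)
  also have "\<dots> = (\<Sum>w\<in>?S. wt p P w * P $$ (last w, j))"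
  proof (rule sum.group)
    show "last ` ?S \<subseteq> {..<N}"
    proof
      fix x assume "x \<in> last ` ?S"
      then obtain w where "w \<in> ?S" "x = last w" by auto
      then have "set w \<subseteq> {..<N}" "w \<noteq> []" using n unfolding W_def by auto
      then show "x \<in> {..<N}" using \<open>x = last w\<close> last_in_set by blast
    qed
  qed auto
  also have "\<dots> = (\<Sum>w\<in>?S. wt p P (w@[j]))"
  proof (rule sum.cong)
    fix w assume "w \<in> ?S"
    then have "w \<noteq> []" using n unfolding W_def by auto
    then show "wt p P w * P $$ (last w, j) = wt p P (w@[j])" by (simp add: wt_snoc)
  qed simp
  also have "\<dots> = (\<Sum>w\<in>(\<lambda>w. w@[j]) ` ?S. wt p P w)" by (simp add: sum.reindex inj_on_def)
  also have "(\<lambda>w. w@[j]) ` ?S = {w\<in>W (Suc n). avoid (butlast w) \<and> last w = j}" (is "_ = ?S'")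
  proof
    show "(\<lambda>w. w@[j]) ` ?S \<subseteq> ?S'" using j by (auto simp: W_def)
    show "?S' \<subseteq> (\<lambda>w. w@[j]) ` ?S"
    proof
      fix w assume w: "w \<in> ?S'"
      then have "butlast w \<in> W n" "w = butlast w @ [j]" using W_Suc_snoc_last[of w n] by auto
      then show "w \<in> (\<lambda>w. w@[j]) ` ?S" using w by (auto intro!: image_eqI[of _ _ "butlast w"])
    qed
  qed
  also have "?S' = {w\<in>W (Suc n). avoid w \<and> last w = j} \<union> {w\<in>Tset (Suc n). last w = j}"
  proof -
    have "\<And>w. w \<in> W (Suc n) \<Longrightarrow> length w = Suc n" unfolding W_def by auto
    then show ?thesis unfolding Tset_def using not_avoid_butlast avoid_butlast by fastforce
  qed
  also have "(\<Sum>w\<in>{w\<in>W (Suc n). avoid w \<and> last w = j} \<union> {w\<in>Tset (Suc n). last w = j}. wt p P w)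
      = a (Suc n) j + (\<Sum>w\<in>{w\<in>Tset (Suc n). last w = j}. wt p P w)"
    unfolding a_def
    by (rule sum.union_disjoint) (auto simp: Tset_def avoid_def)
  also have "(\<Sum>w\<in>{w\<in>Tset (Suc n). last w = j}. wt p P w) = (if j = last u then t (Suc n) else 0)"
  proof -
    have "\<And>w. w \<in> Tset (Suc n) \<Longrightarrow> last w = last u"
      unfolding Tset_def W_def using occ_end_last by fastforce
    then have "{w\<in>Tset (Suc n). last w = j} = (if j = last u then Tset (Suc n) else {})" by auto
    then show ?thesis unfolding t_def by simp
  qed
  finally show ?thesis .
qed

lemma last_u_lt: "last u < N" using u_states r_ge2
  by (metis last_in_set lessThan_iff list.size(3) not_numeral_le_zero subsetD)
lemma hd_u_lt: "hd u < N" using u_states r_ge2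
  by (metis hd_in_set lessThan_iff list.size(3) not_numeral_le_zero subsetD)

lemma sA_as_a: assumes n: "n \<ge> 1" shows "sA n = (\<Sum>j<N. a n j)"
proof -
  let ?S = "{w\<in>W n. avoid w}"
  have "(\<Sum>j<N. a n j) = (\<Sum>j<N. \<Sum>w\<in>{x\<in>?S. last x = j}. wt p P w)"
    unfolding a_def by (auto intro!: sum.cong)
  also have "\<dots> = sA n" unfolding sA_def
  proof (rule sum.group)
    show "last ` ?S \<subseteq> {..<N}"
    proof
      fix x assume "x \<in> last ` ?S"
      then obtain w where "w \<in> ?S" "x = last w" by auto
      then have "set w \<subseteq> {..<N}" "w \<noteq> []" using n unfolding W_def by auto
      then show "x \<in> {..<N}" using \<open>x = last w\<close> last_in_set by blast
    qed
  qed auto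
  finally show ?thesis by simp
qed

lemma sA_rec: assumes n: "n \<ge> 1" shows "sA (Suc n) = sA n - t (Suc n)"
proof -
  have "(\<Sum>j<N. \<Sum>i<N. a n i * P $$ (i,j)) = (\<Sum>i<N. a n i * (\<Sum>j<N. P $$ (i,j)))"
    by (subst sum.swap) (simp add: sum_distrib_left)
  also have "\<dots> = sA n" using sA_as_a[OF n] P_rowsum by simp
  finally have 1: "(\<Sum>j<N. \<Sum>i<N. a n i * P $$ (i,j)) = sA n" .
  have "(\<Sum>j<N. \<Sum>i<N. a n i * P $$ (i,j)) = (\<Sum>j<N. a (Suc n) j + (if j = last u then t (Suc n) else 0))"
    using rec_i[OF n] by simp
  also have "\<dots> = sA (Suc n) + t (Suc n)"
    using sA_as_a[of "Suc n"] last_u_lt by (simp add: sum.distrib)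
  finally show ?thesis using 1 by simp
qed

lemma W1: "W (Suc 0) = (\<lambda>k. [k]) ` {..<N}"
proof
  show "W (Suc 0) \<subseteq> (\<lambda>k. [k]) ` {..<N}"
  proof
    fix w assume "w \<in> W (Suc 0)"
    then obtain k where "w = [k]" "k < N" unfolding W_def by (auto simp: length_Suc_conv)
    then show "w \<in> (\<lambda>k. [k]) ` {..<N}" by auto
  qed
qed (auto simp: W_def)

lemma a1: "j < N \<Longrightarrow> a 1 j = p j"
proof -
  assume j: "j < N"
  have "{w\<in>W 1. avoid w \<and> last w = j} = {[j]}"
    using j r_ge2 by (auto simp: W1 avoid_short)
  then show ?thesis unfolding a_def by (simp add: wt_def)
qed

lemma sA1: "sA 1 = 1"
  using sA_as_a[of 1] a1 p_sum by simp

lemma t_small: "n < r \<Longrightarrow> t n = 0"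
proof -
  assume "n < r"
  then have "Tset n = {}" unfolding Tset_def occ_def W_def by auto
  then show ?thesis unfolding t_def by simp
qed

lemma t_r: "t r = wt p P u"
proof -
  have "Tset r = {u}"
  proof
    show "Tset r \<subseteq> {u}" unfolding Tset_def occ_def W_def by auto
    show "{u} \<subseteq> Tset r" using u_states r_ge2
      unfolding Tset_def occ_def W_def by (auto intro!: avoid_short)
  qed
  then show ?thesis unfolding t_def by simp
qed

lemma sA_le1: "n \<ge> 1 \<Longrightarrow> sA n \<le> 1"
proof (induction n rule: nat_induct_at_least)
  case base then show ?case using sA1 by simp
next
  case (Suc n) then show ?case using sA_rec[of n] t_nonneg[of "Suc n"] by simp
qed

lemma sA_mono: "n \<ge> 1 \<Longrightarrow> sA (Suc n) \<le> sA n"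
  using sA_rec t_nonneg by simp

lemma t_le: "n \<ge> 1 \<Longrightarrow> t (Suc n) \<le> sA n"
  using sA_rec[of n] sA_nonneg[of "Suc n"] by simp

lemma a_le: "n \<ge> 1 \<Longrightarrow> j < N \<Longrightarrow> a n j \<le> sA n"
  using sA_as_a[of n] a_nonneg
  by (metis finite_lessThan lessThan_iff member_le_sum)

lemma pw_drop:
  assumes "1 \<le> k" "k \<le> length xs"
  shows "pw P (xs!(k-1)) (drop k xs) = (\<Prod>j\<in>{k..<length xs}. P $$ (xs!(j-1), xs!j))"
proof -
  have "pw P (xs!(k-1)) (drop k xs) = (\<Prod>j<length xs - k. P $$ (xs!(j+k-1), xs!(j+k)))"
    unfolding pw_prod using assms
    by (intro prod.cong) (auto simp: nth_Cons' add.commute)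
  also have "\<dots> = (\<Prod>j\<in>(\<lambda>j. j+k) ` {..<length xs - k}. P $$ (xs!(j-1), xs!j))"
    by (subst prod.reindex) (auto simp: inj_on_def)
  also have "(\<lambda>j. j+k) ` {..<length xs - k} = {k..<length xs}"
  proof
    show "{k..<length xs} \<subseteq> (\<lambda>j. j+k) ` {..<length xs - k}"
    proof
      fix x assume "x \<in> {k..<length xs}"
      then show "x \<in> (\<lambda>j. j+k) ` {..<length xs - k}" by (auto intro!: image_eqI[of _ _ "x - k"])
    qed
  qed auto
  finally show ?thesis .
qed

definition delta :: real where "delta = word_delta P u"
definition cc :: "nat \<Rightarrow> bool" where "cc s = autocorr_c u s"
definition ds :: "nat \<Rightarrow> real" where "ds s = autocorr_delta P u s"

lemma ds_pw: "1 \<le> k \<Longrightarrow> k \<le> r \<Longrightarrow> ds (r - k) = pw P (u!(k-1)) (drop k u)"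
  unfolding ds_def autocorr_delta_def using pw_drop[of k u] by simp

lemma delta_pw: "delta = pw P (hd u) (tl u)"
proof -
  have "u \<noteq> []" using r_ge2 by auto
  then have "hd u = u!0" by (simp add: hd_conv_nth)
  then show ?thesis using pw_drop[of 1 u] r_ge2 unfolding delta_def word_delta_def by (simp add: drop_Suc)
qed

lemma wt_append_u: "w \<noteq> [] \<Longrightarrow> wt p P (w @ u) = wt p P w * P $$ (last w, hd u) * delta"
proof -
  assume "w \<noteq> []"
  have u: "u = hd u # tl u" using r_ge2 by (cases u) auto
  have "wt p P (w @ u) = wt p P w * pw P (last w) u" using wt_append[OF \<open>w \<noteq> []\<close>] .
  also have "pw P (last w) u = P $$ (last w, hd u) * delta"
    by (subst u) (simp add: delta_pw)
  finally show ?thesis by simp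
qed

definition fo :: "nat list \<Rightarrow> nat" where "fo w = (LEAST i. occ (w @ u) i)"

lemma occ_append_u: "occ (w @ u) (length w)"
  unfolding occ_def by simp

lemma fo_props:
  assumes "avoid w"
  shows "occ (w @ u) (fo w)" "fo w \<le> length w" "length w < fo w + r"
    "\<And>i. i < fo w \<Longrightarrow> \<not> occ (w @ u) i"
proof -
  show "occ (w @ u) (fo w)" unfolding fo_def using occ_append_u by (rule LeastI)
  show "fo w \<le> length w" unfolding fo_def using occ_append_u by (rule Least_le)
  show "\<And>i. i < fo w \<Longrightarrow> \<not> occ (w @ u) i" unfolding fo_def using not_less_Least by blast
  show "length w < fo w + r"
  proof (rule ccontr)
    assume "\<not> length w < fo w + r"
    then have "occ w (fo w)" using occ_append_left \<open>occ (w @ u) (fo w)\<close> by auto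
    then show False using assms unfolding avoid_def by auto
  qed
qed

lemma rec_ii:
  assumes n: "n \<ge> 1"
  shows "(\<Sum>w\<in>{w\<in>W n. avoid w}. wt p P (w @ u))
       = (\<Sum>k\<in>{1..r}. if cc (r-k) then ds (r-k) * t (n+k) else 0)"
proof -
  let ?S = "{w\<in>W n. avoid w}"
  define key where "key w = fo w + r - n" for w
  have "(\<Sum>w\<in>?S. wt p P (w @ u)) = (\<Sum>k\<in>{1..r}. \<Sum>w\<in>{w\<in>?S. key w = k}. wt p P (w @ u))"
  proof (rule sum.group[symmetric])
    show "key ` ?S \<subseteq> {1..r}"
    proof
      fix x assume "x \<in> key ` ?S"
      then obtain w where w: "w \<in> ?S" "x = key w" by auto
      then have "length w = n" "avoid w" unfolding W_def by auto
      then show "x \<in> {1..r}" using fo_props[of w] w(2) unfolding key_def by auto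
    qed
  qed auto
  also have "\<dots> = (\<Sum>k\<in>{1..r}. if cc (r-k) then ds (r-k) * t (n+k) else 0)"
  proof (rule sum.cong)
    fix k assume k: "k \<in> {1..r}"
    have key_fo: "fo w = n + k - r \<and> r \<le> n + k" if "w \<in> ?S" "key w = k" for w
    proof -
      have "length w = n" "avoid w" using that unfolding W_def by auto
      then show ?thesis using fo_props[of w] that(2) unfolding key_def by auto
    qed
    show "(\<Sum>w\<in>{w\<in>?S. key w = k}. wt p P (w @ u)) = (if cc (r-k) then ds (r-k) * t (n+k) else 0)"
    proof (cases "cc (r-k)")
      case False
      have "{w\<in>?S. key w = k} = {}"
      proof (rule ccontr)
        assume "{w\<in>?S. key w = k} \<noteq> {}"
        then obtain w where w: "w \<in> ?S" "key w = k" by auto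
        then have len: "length w = n" and av: "avoid w" unfolding W_def by auto
        from key_fo[OF w] have fk: "fo w = n + k - r" "r \<le> n + k" by auto
        have "occ (w @ u) (n + k - r)" using fo_props(1)[OF av] fk by simp
        then have "take r (drop (n + k - r) (w @ u)) = u" unfolding occ_def by blast
        then have "drop (r - k) (take r (drop (n + k - r) (w @ u))) = drop (r - k) u" by simp
        also have "drop (r - k) (take r (drop (n + k - r) (w @ u))) = take k (drop n (w @ u))"
        proof -
          have "drop (r - k) (take r (drop (n + k - r) (w @ u))) = take (r - (r - k)) (drop (r - k) (drop (n + k - r) (w @ u)))"
            by (rule drop_take)
          also have "\<dots> = take k (drop (r - k + (n + k - r)) (w @ u))" using k by (simp add: drop_drop del: drop_append take_append)
          also have "r - k + (n + k - r) = n" using fk k by auto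
          finally show ?thesis .
        qed
        also have "\<dots> = take k u" using len by simp
        finally have "drop (r - k) u = take (r - (r - k)) u" using k by simp
        then have "cc (r - k)" unfolding cc_def autocorr_c_def by simp
        then show False using False by simp
      qed
      then show ?thesis using False by (simp only: sum.empty if_False)
    next
      case True
      have cu: "drop (r - k) u = take k u"
        using True k unfolding cc_def autocorr_c_def by simp
      have "(\<Sum>w\<in>{w\<in>?S. key w = k}. wt p P (w @ u)) = (\<Sum>v\<in>Tset (n+k). ds (r-k) * wt p P v)"
      proof (rule sum.reindex_bij_witness[where i = "\<lambda>v. take n v" and j = "\<lambda>w. w @ take k u"])
        fix w assume w: "w \<in> {w\<in>?S. key w = k}"
        then have len: "length w = n" and av: "avoid w" and ws: "set w \<subseteq> {..<N}" unfolding W_def by auto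
        from key_fo w have fk: "fo w = n + k - r" "r \<le> n + k" by auto
        show "take n (w @ take k u) = w" using len by simp
        have eq: "w @ take k u = take (n + k) (w @ u)" using len by simp
        show "w @ take k u \<in> Tset (n + k)"
          unfolding Tset_def W_def
        proof (intro CollectI conjI)
          show "set (w @ take k u) \<subseteq> {..<N}" using ws u_states by (auto dest: in_set_takeD)
          show "length (w @ take k u) = n + k" using len k by simp
          show "occ (w @ take k u) (n + k - r)"
            unfolding eq occ_take using fo_props(1)[OF av] fk by simp
          show "avoid (butlast (w @ take k u))"
            unfolding avoid_def
          proof
            fix i
            have "butlast (take (n + k) (w @ u)) = take (n + k - 1) (w @ u)"
              by (rule butlast_take) (use k len in simp)
            then have "butlast (w @ take k u) = take (n + k - 1) (w @ u)" by (simp only: eq)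
            moreover have "\<not> (occ (w @ u) i \<and> i + r \<le> n + k - 1)"
            proof
              assume h: "occ (w @ u) i \<and> i + r \<le> n + k - 1"
              then have "i + r \<le> n + k - 1" by simp
              then have "i < fo w" using fk r_ge2 by linarith
              then show False using fo_props(4)[OF av] h by blast
            qed
            ultimately show "\<not> occ (butlast (w @ take k u)) i" by (metis occ_take)
          qed
        qed
        have ne: "w @ take k u \<noteq> []" using k r_ge2 by auto
        have tk: "take k u \<noteq> []" using k r_ge2 by auto
        then have "last (w @ take k u) = last (take k u)" by simp
        also have "\<dots> = u ! (k - 1)" using k tk by (auto simp add: last_conv_nth min_def)
        finally have lst: "last (w @ take k u) = u ! (k - 1)" .
        have "wt p P (w @ u) = wt p P ((w @ take k u) @ drop k u)" by simp
        also have "\<dots> = wt p P (w @ take k u) * ds (r - k)"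
        proof -
          have "pw P (u ! (k - 1)) (drop k u) = ds (r - k)" using ds_pw[of k] k by simp
          then show ?thesis by (subst wt_append[OF ne]) (simp add: lst)
        qed
        finally show "ds (r-k) * wt p P (w @ take k u) = wt p P (w @ u)" by simp
      next
        fix v assume v: "v \<in> Tset (n + k)"
        then have lenv: "length v = n + k" and avb: "avoid (butlast v)" and oc: "occ v (n + k - r)"
          and vs: "set v \<subseteq> {..<N}" unfolding Tset_def W_def by auto
        have rnk: "r \<le> n + k" using oc lenv unfolding occ_def by auto
        have dv: "drop (n + k - r) v = u" using oc rnk lenv unfolding occ_def by simp
        have "drop n v = drop (r - k) (drop (n + k - r) v)" using rnk k by simp
        then have dn: "drop n v = take k u" using dv cu by simp
        show tv: "take n v @ take k u = v" using dn by (metis append_take_drop_id)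
        let ?w = "take n v"
        have lw: "length ?w = n" using lenv by simp
        have avw: "avoid ?w"
        proof -
          have "take n v = take n (butlast v)" using lenv k by (auto simp add: butlast_conv_take min_def)
          then show ?thesis using avoid_take[OF avb] by simp
        qed
        have eq: "take (n + k) (?w @ u) = v" using tv lw by (metis append_eq_conv_conj take_add take_append)
        have "occ (take (n + k) (?w @ u)) (n + k - r)" using oc by (simp only: eq)
        then have occw: "occ (?w @ u) (n + k - r)" by (metis occ_take)
        have noocc: "\<not> occ (?w @ u) i" if "i < n + k - r" for i
        proof
          assume "occ (?w @ u) i"
          moreover have "i + r \<le> n + k - 1" using that rnk by linarith
          ultimately have "occ (take (n + k - 1) (?w @ u)) i" by (metis occ_take)
          moreover have "take (n + k - 1) (?w @ u) = butlast v"
            using eq lenv by (metis butlast_conv_take take_take min.absorb1 diff_le_self)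
          ultimately show False using avb unfolding avoid_def by simp
        qed
        have "fo ?w = n + k - r" unfolding fo_def
          by (rule Least_equality) (use occw noocc in \<open>auto simp: not_less[symmetric]\<close>)
        then have "key ?w = k" unfolding key_def using rnk by simp
        moreover have "?w \<in> W n" using vs lw unfolding W_def by (auto dest: in_set_takeD)
        ultimately show "take n v \<in> {w\<in>?S. key w = k}" using avw by simp
      qed
      also have "\<dots> = ds (r-k) * t (n+k)" unfolding t_def by (simp add: sum_distrib_left)
      finally show ?thesis using True by simp
    qed
  qed simp
  finally show ?thesis .
qed

lemma rec_ii':
  assumes n: "n \<ge> 1"
  shows "(\<Sum>i<N. a n i * P $$ (i, hd u)) * delta
       = (\<Sum>k\<in>{1..r}. if cc (r-k) then ds (r-k) * t (n+k) else 0)"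
proof -
  let ?S = "{w\<in>W n. avoid w}"
  have "(\<Sum>i<N. a n i * P $$ (i, hd u)) = (\<Sum>i<N. \<Sum>w\<in>{x\<in>?S. last x = i}. wt p P w * P $$ (last w, hd u))"
    unfolding a_def by (auto simp: sum_distrib_right intro!: sum.cong)
  also have "\<dots> = (\<Sum>w\<in>?S. wt p P w * P $$ (last w, hd u))"
  proof (rule sum.group)
    show "last ` ?S \<subseteq> {..<N}"
    proof
      fix x assume "x \<in> last ` ?S"
      then obtain w where "w \<in> ?S" "x = last w" by auto
      then have "set w \<subseteq> {..<N}" "w \<noteq> []" using n unfolding W_def by auto
      then show "x \<in> {..<N}" using \<open>x = last w\<close> last_in_set by blast
    qed
  qed auto
  finally have "(\<Sum>i<N. a n i * P $$ (i, hd u)) * delta = (\<Sum>w\<in>?S. wt p P w * P $$ (last w, hd u) * delta)"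
    by (simp add: sum_distrib_right)
  also have "\<dots> = (\<Sum>w\<in>?S. wt p P (w @ u))"
  proof (rule sum.cong)
    fix w assume "w \<in> ?S"
    then have "w \<noteq> []" using n unfolding W_def by auto
    then show "wt p P w * P $$ (last w, hd u) * delta = wt p P (w @ u)" by (simp add: wt_append_u)
  qed simp
  finally have "(\<Sum>i<N. a n i * P $$ (i, hd u)) * delta = (\<Sum>w\<in>?S. wt p P (w @ u))" .
  then show ?thesis using rec_ii[OF n] by simp
qed

end

lemma mult_mat_entry:
  assumes "X \<in> carrier_mat n n" "Y \<in> carrier_mat n n" "i < n" "j < n"
  shows "(X * Y) $$ (i,j) = (\<Sum>k<n. X $$ (i,k) * Y $$ (k,j))"
  using assms by (simp add: scalar_prod_def atLeast0LessThan)

lemma mult_mat_vec_entry: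
  assumes "X \<in> carrier_mat n n" "v \<in> carrier_vec n" "i < n"
  shows "(X *\<^sub>v v) $ i = (\<Sum>k<n. X $$ (i,k) * v $ k)"
  using assms by (simp add: scalar_prod_def atLeast0LessThan)

context hs
begin

lemma reach_closed:
  assumes cl: "\<And>k i. k \<in> Z \<Longrightarrow> k < N \<Longrightarrow> i < N \<Longrightarrow> P $$ (i,k) > 0 \<Longrightarrow> i \<in> Z"
    and j: "j < N" "j \<in> Z" and i: "i < N"
  shows "i \<in> Z"
proof -
  have main: "\<forall>i<N. \<forall>j'<N. (A ^\<^sub>m n) $$ (i,j') \<ge> 0 \<and> ((A ^\<^sub>m n) $$ (i,j') > 0 \<longrightarrow> j' \<in> Z \<longrightarrow> i \<in> Z)" for n
  proof (induction n)
    case 0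
    then show ?case using A_carrier by auto
  next
    case (Suc n)
    have An: "A ^\<^sub>m n \<in> carrier_mat N N" using A_carrier by (metis pow_mat_dim_square carrier_matD carrier_matI)
    show ?case
    proof (intro allI impI conjI)
      fix i j' assume ij: "i < N" "j' < N"
      have e: "(A ^\<^sub>m Suc n) $$ (i,j') = (\<Sum>k<N. (A ^\<^sub>m n) $$ (i,k) * A $$ (k,j'))"
        using mult_mat_entry[OF An A_carrier ij] by simp
      have nn: "\<And>k. k < N \<Longrightarrow> (A ^\<^sub>m n) $$ (i,k) * A $$ (k,j') \<ge> 0"
        using Suc ij A_01 by (metis lessThan_iff mult_nonneg_nonneg order_refl zero_le_one)
      show "(A ^\<^sub>m Suc n) $$ (i,j') \<ge> 0" unfolding e by (rule sum_nonneg) (use nn in auto)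
      assume pos: "(A ^\<^sub>m Suc n) $$ (i,j') > 0" and jz: "j' \<in> Z"
      obtain k where k: "k < N" "(A ^\<^sub>m n) $$ (i,k) * A $$ (k,j') > 0"
      proof (rule ccontr)
        assume "\<not> thesis"
        then have "\<forall>k<N. (A ^\<^sub>m n) $$ (i,k) * A $$ (k,j') \<le> 0" using that by (meson not_le)
        then have "(\<Sum>k<N. (A ^\<^sub>m n) $$ (i,k) * A $$ (k,j')) \<le> 0" by (intro sum_nonpos) auto
        then show False using pos e by simp
      qed
      have "A $$ (k,j') \<noteq> 0" using k by auto
      then have "A $$ (k,j') = 1" using A_01 k ij by blast
      then have "P $$ (k,j') > 0" using P_pos_iff k ij by blast
      then have "k \<in> Z" using cl jz ij k by blast
      moreover have "(A ^\<^sub>m n) $$ (i,k) > 0" using k \<open>A $$ (k,j') = 1\<close> by simp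
      ultimately show "i \<in> Z" using Suc ij k by blast
    qed
  qed
  obtain n where "n > 0" "(A ^\<^sub>m n) $$ (i,j) > 0" using Airr i j unfolding irreducible_mat_def by blast
  then show ?thesis using main[of n] i j by blast
qed

lemma N_pos: "N > 0" using hd_u_lt by simp

lemma p_pos: "i < N \<Longrightarrow> p i > 0"
proof (rule ccontr)
  assume i: "i < N" and "\<not> p i > 0"
  then have pi: "p i = 0" using p_nonneg[of i] by linarith
  let ?Z = "{k. p k = 0}"
  have "k \<in> ?Z" if k: "k < N" for k
  proof (rule reach_closed[of ?Z i k])
    fix k' i' assume h: "k' \<in> ?Z" "k' < N" "i' < N" "P $$ (i',k') > 0"
    have "(\<Sum>i<N. p i * P $$ (i,k')) = 0" using p_stat[OF h(2)] h(1) by simp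
    then have "\<forall>i\<in>{..<N}. p i * P $$ (i,k') = 0"
      by (subst sum_nonneg_eq_0_iff[symmetric]) (auto intro!: mult_nonneg_nonneg p_nonneg P_nonneg h(2))
    then have "p i' * P $$ (i',k') = 0" using h by auto
    then show "i' \<in> ?Z" using h by simp
  qed (use i pi k in auto)
  then have "(\<Sum>k<N. p k) = 0" by simp
  then show False using p_sum by simp
qed

definition pmin :: real where "pmin = Min (p ` {..<N})"

lemma pmin_pos: "pmin > 0"
  unfolding pmin_def using N_pos p_pos by (subst Min_gr_iff) auto

lemma pmin_le: "i < N \<Longrightarrow> pmin \<le> p i"
  unfolding pmin_def by auto

lemma P_le1: "i < N \<Longrightarrow> j < N \<Longrightarrow> P $$ (i,j) \<le> 1"
proof -
  assume ij: "i < N" "j < N"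
  have "P $$ (i,j) \<le> (\<Sum>k<N. P $$ (i,k))"
    by (rule member_le_sum) (use ij P_nonneg in auto)
  then show ?thesis using P_rowsum ij by simp
qed

lemma W_Suc_image: "W (Suc n) = (\<lambda>(k,v). k#v) ` ({..<N} \<times> W n)"
proof
  show "W (Suc n) \<subseteq> (\<lambda>(k,v). k#v) ` ({..<N} \<times> W n)"
  proof
    fix w assume "w \<in> W (Suc n)"
    then obtain k v where "w = k#v" "k < N" "v \<in> W n" unfolding W_def by (cases w) auto
    then show "w \<in> (\<lambda>(k,v). k#v) ` ({..<N} \<times> W n)" by auto
  qed
qed (auto simp: W_def)

lemma sum_W_Suc: "(\<Sum>w\<in>W (Suc n). f w) = (\<Sum>k<N. \<Sum>v\<in>W n. f (k#v))"
proof -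
  have "(\<Sum>w\<in>W (Suc n). f w) = (\<Sum>(k,v)\<in>{..<N} \<times> W n. f (k#v))"
    unfolding W_Suc_image by (subst sum.reindex) (auto simp: inj_on_def case_prod_unfold)
  also have "\<dots> = (\<Sum>k<N. \<Sum>v\<in>W n. f (k#v))" by (simp add: sum.cartesian_product)
  finally show ?thesis .
qed

lemma W_add_image: "W (m + n) = (\<lambda>(w1,w2). w1 @ w2) ` (W m \<times> W n)"
proof
  show "W (m + n) \<subseteq> (\<lambda>(w1,w2). w1 @ w2) ` (W m \<times> W n)"
  proof
    fix w assume w: "w \<in> W (m + n)"
    have "w = take m w @ drop m w" by simp
    moreover have "take m w \<in> W m" "drop m w \<in> W n" using w unfolding W_def
      by (auto dest: in_set_takeD in_set_dropD)
    ultimately show "w \<in> (\<lambda>(w1,w2). w1 @ w2) ` (W m \<times> W n)"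
      by (auto intro!: image_eqI[of _ _ "(take m w, drop m w)"])
  qed
qed (auto simp: W_def)

lemma sum_W_add: "(\<Sum>w\<in>W (m + n). f w) = (\<Sum>w1\<in>W m. \<Sum>w2\<in>W n. f (w1 @ w2))"
proof -
  have inj: "inj_on (\<lambda>(w1,w2). w1 @ w2) (W m \<times> W n)"
    by (auto simp: inj_on_def W_def)
  have "(\<Sum>w\<in>W (m + n). f w) = (\<Sum>(w1,w2)\<in>W m \<times> W n. f (w1 @ w2))"
    unfolding W_add_image by (subst sum.reindex[OF inj]) (auto simp: case_prod_unfold)
  also have "\<dots> = (\<Sum>w1\<in>W m. \<Sum>w2\<in>W n. f (w1 @ w2))" by (simp add: sum.cartesian_product)
  finally show ?thesis .
qed

lemma sA_alt: "sA n = (\<Sum>w\<in>W n. if avoid w then wt p P w else 0)"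
  unfolding sA_def by (simp add: sum.inter_filter)

lemma avoid_append: "avoid (w1 @ w2) \<Longrightarrow> avoid w1 \<and> avoid w2"
proof
  assume h: "avoid (w1 @ w2)"
  show "avoid w1" using avoid_take[OF h, of "length w1"] by simp
  show "avoid w2" unfolding avoid_def
  proof
    fix i show "\<not> occ w2 i"
    proof
      assume "occ w2 i"
      then have "occ (w1 @ w2) (length w1 + i)" unfolding occ_def by simp
      then show False using h unfolding avoid_def by blast
    qed
  qed
qed

lemma wt_split_le:
  assumes "w1 \<in> W m" "w2 \<in> W n" "m \<ge> 1" "n \<ge> 1"
  shows "wt p P (w1 @ w2) \<le> wt p P w1 * wt p P w2 / pmin"
proof -
  obtain k v where w2: "w2 = k # v" using assms by (cases w2) (auto simp: W_def)
  have w1ne: "w1 \<noteq> []" using assms by (auto simp: W_def)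
  have kN: "k < N" "set v \<subseteq> {..<N}" using assms w2 by (auto simp: W_def)
  have w1N: "set w1 \<subseteq> {..<N}" using assms by (auto simp: W_def)
  have lN: "last w1 < N" using w1N w1ne last_in_set by blast
  have pwv: "pw P k v \<ge> 0" using pw_nonneg kN by auto
  have "wt p P (w1 @ w2) = wt p P w1 * (P $$ (last w1, k) * pw P k v)"
    using wt_append[OF w1ne] w2 by simp
  also have "\<dots> \<le> wt p P w1 * pw P k v"
    using P_le1[OF lN kN(1)] pwv wt_nonneg[OF w1N]
    by (intro mult_left_mono) (auto simp: mult_left_le_one_le P_nonneg lN kN)
  also have "pw P k v \<le> wt p P w2 / pmin"
  proof -
    have "pmin * pw P k v \<le> p k * pw P k v" using pmin_le[OF kN(1)] pwv by (simp add: mult_right_mono)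
    then show ?thesis using w2 pmin_pos by (simp add: wt_def pos_le_divide_eq mult.commute)
  qed
  then have "wt p P w1 * pw P k v \<le> wt p P w1 * (wt p P w2 / pmin)"
    using wt_nonneg[OF w1N] by (metis mult_left_mono times_divide_eq_right)
  finally show ?thesis by simp
qed

lemma submult:
  assumes "m \<ge> 1" "n \<ge> 1"
  shows "sA (m + n) \<le> sA m * sA n / pmin"
proof -
  have "sA (m + n) = (\<Sum>w1\<in>W m. \<Sum>w2\<in>W n. if avoid (w1 @ w2) then wt p P (w1 @ w2) else 0)"
    unfolding sA_alt by (rule sum_W_add)
  also have "\<dots> \<le> (\<Sum>w1\<in>W m. \<Sum>w2\<in>W n. (if avoid w1 then wt p P w1 else 0) * (if avoid w2 then wt p P w2 else 0) / pmin)"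
  proof (intro sum_mono)
    fix w1 w2 assume w: "w1 \<in> W m" "w2 \<in> W n"
    show "(if avoid (w1 @ w2) then wt p P (w1 @ w2) else 0) \<le> (if avoid w1 then wt p P w1 else 0) * (if avoid w2 then wt p P w2 else 0) / pmin"
      using avoid_append[of w1 w2] wt_split_le[OF w assms] wt_nonneg pmin_pos w
      by (auto simp: W_def intro!: divide_nonneg_pos mult_nonneg_nonneg)
  qed
  also have "\<dots> = (\<Sum>w1\<in>W m. \<Sum>w2\<in>W n. (if avoid w1 then wt p P w1 else 0) * (if avoid w2 then wt p P w2 else 0)) / pmin"
    by (simp add: sum_divide_distrib)
  also have "\<dots> = sA m * sA n / pmin"
    unfolding sA_alt sum_product ..
  finally show ?thesis .
qed

end

context hs
begin

lemma harm_nonpos: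
  assumes j: "j < N" "x j = 0"
    and h: "\<And>i. i < N \<Longrightarrow> i \<noteq> j \<Longrightarrow> x i = (\<Sum>k<N. P $$ (i,k) * x k)"
    and i: "i < N"
  shows "x i \<le> 0"
proof -
  let ?M = "Max (x ` {..<N})"
  have fin: "finite (x ` {..<N})" "x ` {..<N} \<noteq> {}" using N_pos by auto
  have M_ge: "\<And>i. i < N \<Longrightarrow> x i \<le> ?M" using fin by auto
  have "?M \<le> 0"
  proof (rule ccontr)
    assume Mpos: "\<not> ?M \<le> 0"
    let ?Z = "{i. x i < ?M}"
    have allZ: "k \<in> ?Z" if k: "k < N" for k
    proof (rule reach_closed[of ?Z j k])
      fix k' i' assume hk: "k' \<in> ?Z" "k' < N" "i' < N" "P $$ (i',k') > 0"
      show "i' \<in> ?Z"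
      proof (rule ccontr)
        assume "i' \<notin> ?Z"
        then have xi: "x i' = ?M" using M_ge[OF hk(3)] by simp
        then have "i' \<noteq> j" using j Mpos by auto
        then have "x i' = (\<Sum>k<N. P $$ (i',k) * x k)" using h hk(3) by simp
        also have "\<dots> < (\<Sum>k<N. P $$ (i',k) * ?M)"
        proof (rule sum_strict_mono_ex1)
          show "\<forall>k\<in>{..<N}. P $$ (i',k) * x k \<le> P $$ (i',k) * ?M"
            using M_ge P_nonneg hk(3) by (auto intro: mult_left_mono)
          show "\<exists>k\<in>{..<N}. P $$ (i',k) * x k < P $$ (i',k) * ?M"
            using hk by (auto intro!: bexI[of _ k'])
        qed simp
        also have "\<dots> = ?M" using P_rowsum[OF hk(3)] by (simp add: sum_distrib_right[symmetric])
        finally show False using xi by simp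
      qed
    qed (use j Mpos k in auto)
    obtain i0 where i0: "i0 < N" "x i0 = ?M" using Max_in[OF fin] by auto
    then show False using allZ[OF i0(1)] by simp
  qed
  then show ?thesis using M_ge[OF i] by simp
qed

lemma harm_zero:
  assumes j: "j < N" "x j = 0"
    and h: "\<And>i. i < N \<Longrightarrow> i \<noteq> j \<Longrightarrow> x i = (\<Sum>k<N. P $$ (i,k) * x k)"
    and i: "i < N"
  shows "x i = 0"
proof -
  have "x i \<le> 0" using harm_nonpos[OF j h i] .
  moreover have h2: "\<And>i'. i' < N \<Longrightarrow> i' \<noteq> j \<Longrightarrow> - x i' = (\<Sum>k<N. P $$ (i',k) * - x k)"
    using h by (simp add: sum_negf)
  have "- x i \<le> 0" using harm_nonpos[of j "\<lambda>i. - x i", OF _ _ h2 i] j by simp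
  ultimately show ?thesis by simp
qed

lemma harm_const:
  assumes h: "\<And>i. i < N \<Longrightarrow> x i = (\<Sum>k<N. P $$ (i,k) * x k)"
    and i: "i < N" and j: "j < N"
  shows "x i = x j"
proof -
  have h2: "\<And>i'. i' < N \<Longrightarrow> i' \<noteq> j \<Longrightarrow> x i' - x j = (\<Sum>k<N. P $$ (i',k) * (x k - x j))"
  proof -
    fix i' assume i': "i' < N" "i' \<noteq> j"
    have "(\<Sum>k<N. P $$ (i',k) * (x k - x j)) = (\<Sum>k<N. P $$ (i',k) * x k) - (\<Sum>k<N. P $$ (i',k)) * x j"
      by (simp add: right_diff_distrib sum_subtractf sum_distrib_right)
    then show "x i' - x j = (\<Sum>k<N. P $$ (i',k) * (x k - x j))" using h[OF i'(1)] P_rowsum[OF i'(1)] by simp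
  qed
  have "x i - x j = 0" using harm_zero[of j "\<lambda>i. x i - x j", OF _ _ h2 i] j by simp
  then show ?thesis by simp
qed

fun gg :: "nat \<Rightarrow> nat \<Rightarrow> real" where
  "gg 0 i = 1"
| "gg (Suc n) i = (\<Sum>k<N. if k = last u then 0 else P $$ (i,k) * gg n k)"

lemma W0: "W 0 = {[]}" unfolding W_def by auto

lemma gg_words: "(\<Sum>v\<in>W n. if last u \<in> set v then 0 else pw P i v) = gg n i"
proof (induction n arbitrary: i)
  case 0 then show ?case by (simp add: W0)
next
  case (Suc n)
  have "(\<Sum>v\<in>W (Suc n). if last u \<in> set v then 0 else pw P i v)
      = (\<Sum>k<N. \<Sum>v\<in>W n. if last u \<in> set (k#v) then 0 else pw P i (k#v))" by (rule sum_W_Suc)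
  also have "\<dots> = (\<Sum>k<N. if k = last u then 0 else P $$ (i,k) * (\<Sum>v\<in>W n. if last u \<in> set v then 0 else pw P k v))"
    by (intro sum.cong) (auto simp: sum_distrib_left intro!: sum.cong)
  also have "\<dots> = gg (Suc n) i" unfolding Suc.IH by simp
  finally show ?case .
qed

lemma gg_nonneg: "i < N \<Longrightarrow> gg n i \<ge> 0"
  by (induction n arbitrary: i) (auto intro!: sum_nonneg mult_nonneg_nonneg P_nonneg)

lemma avoid_cons_no_last: "last u \<notin> set v \<Longrightarrow> avoid (i # v)"
  unfolding avoid_def
proof
  fix q assume nl: "last u \<notin> set v"
  show "\<not> occ (i # v) q"
  proof
    assume "occ (i # v) q"
    then have eq: "take r (drop q (i # v)) = u" unfolding occ_def by auto
    have "last u \<in> set (drop 1 u)"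
    proof -
      have "drop 1 u \<noteq> []" using r_ge2 by simp
      moreover have "last (drop 1 u) = last u" using r_ge2 by (simp add: last_drop)
      ultimately show ?thesis by (metis last_in_set)
    qed
    also have "drop 1 u = take (r - 1) (drop 1 (drop q (i # v)))"
      by (subst eq[symmetric]) (simp add: drop_take)
    also have "set \<dots> \<subseteq> set (drop 1 (drop q (i # v)))" by (rule set_take_subset)
    also have "drop 1 (drop q (i # v)) = drop q v" by (simp add: drop_Suc[symmetric] drop_drop)
    also have "set (drop q v) \<subseteq> set v" by (rule set_drop_subset)
    finally show False using nl by simp
  qed
qed

lemma sA_ge_gg:
  assumes i: "i < N"
  shows "p i * gg n i \<le> sA (Suc n)"
proof -
  have "p i * gg n i = (\<Sum>v\<in>W n. if last u \<in> set v then 0 else p i * pw P i v)"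
    unfolding gg_words[symmetric] by (auto simp: sum_distrib_left intro!: sum.cong)
  also have "\<dots> \<le> (\<Sum>v\<in>W n. if avoid (i#v) then wt p P (i#v) else 0)"
    by (intro sum_mono) (auto simp: wt_def avoid_cons_no_last W_def intro!: mult_nonneg_nonneg p_nonneg i pw_nonneg)
  also have "\<dots> \<le> (\<Sum>k<N. \<Sum>v\<in>W n. if avoid (k#v) then wt p P (k#v) else 0)"
  proof (rule member_le_sum[of i "{..<N}" "\<lambda>k. \<Sum>v\<in>W n. if avoid (k#v) then wt p P (k#v) else 0"])
    fix k assume "k \<in> {..<N} - {i}"
    then show "0 \<le> (\<Sum>v\<in>W n. if avoid (k#v) then wt p P (k#v) else 0)"
      by (intro sum_nonneg) (auto simp: W_def intro!: wt_nonneg)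
  qed (use i in auto)
  also have "\<dots> = sA (Suc n)" unfolding sA_alt by (rule sum_W_Suc[symmetric])
  finally show ?thesis .
qed

lemma eig_growth:
  assumes z1: "z1 > 0"
    and x: "\<And>i. i < N \<Longrightarrow> x i = z1 * (\<Sum>k<N. P $$ (i,k) * x k)"
    and x0: "x (last u) = 0"
    and i: "i < N"
  shows "\<bar>x i\<bar> \<le> z1 ^ n * gg n i * Max ((\<lambda>k. \<bar>x k\<bar>) ` {..<N})"
  using i
proof (induction n arbitrary: i)
  case 0
  then show ?case by simp
next
  case (Suc n)
  let ?M = "Max ((\<lambda>k. \<bar>x k\<bar>) ` {..<N})"
  have "\<bar>x i\<bar> = z1 * \<bar>\<Sum>k<N. P $$ (i,k) * x k\<bar>" using x[OF Suc.prems] z1 by (simp add: abs_mult)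
  also have "(\<Sum>k<N. P $$ (i,k) * x k) = (\<Sum>k<N. if k = last u then 0 else P $$ (i,k) * x k)"
    using x0 by (intro sum.cong) auto
  also have "\<bar>\<dots>\<bar> \<le> (\<Sum>k<N. if k = last u then 0 else P $$ (i,k) * \<bar>x k\<bar>)"
    by (rule order.trans[OF sum_abs]) (auto intro!: sum_mono simp: abs_mult P_nonneg Suc.prems)
  also have "\<dots> \<le> (\<Sum>k<N. if k = last u then 0 else P $$ (i,k) * (z1 ^ n * gg n k * ?M))"
    by (intro sum_mono) (auto intro!: mult_left_mono Suc.IH P_nonneg Suc.prems)
  finally have "\<bar>x i\<bar> \<le> z1 * (\<Sum>k<N. if k = last u then 0 else P $$ (i,k) * (z1 ^ n * gg n k * ?M))"
    using z1 by (simp add: mult_left_mono)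
  also have "\<dots> = z1 ^ Suc n * gg (Suc n) i * ?M"
    by (simp add: sum_distrib_left sum_distrib_right if_distrib algebra_simps cong: if_cong)
  finally show ?case .
qed

lemma eig_lower:
  assumes z1: "z1 > 0"
    and x: "\<And>i. i < N \<Longrightarrow> x i = z1 * (\<Sum>k<N. P $$ (i,k) * x k)"
    and x0: "x (last u) = 0"
    and nz: "i0 < N" "x i0 \<noteq> 0"
  shows "pmin / z1 ^ n \<le> sA (Suc n)"
proof -
  let ?M = "Max ((\<lambda>k. \<bar>x k\<bar>) ` {..<N})"
  have fin: "finite ((\<lambda>k. \<bar>x k\<bar>) ` {..<N})" "(\<lambda>k. \<bar>x k\<bar>) ` {..<N} \<noteq> {}" using N_pos by auto
  obtain i where i: "i < N" "\<bar>x i\<bar> = ?M" using Max_in[OF fin] by auto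
  have Mge: "?M \<ge> \<bar>x i0\<bar>" using fin nz by (intro Max_ge) auto
  have "\<bar>x i0\<bar> > 0" using nz by simp
  then have Mpos: "?M > 0" using Mge by linarith
  have "?M \<le> z1 ^ n * gg n i * ?M" using eig_growth[OF z1 x x0 i(1), of n] i by simp
  then have "1 \<le> z1 ^ n * gg n i" using Mpos by simp
  then have g: "1 / z1 ^ n \<le> gg n i" using z1 by (simp add: divide_le_eq mult.commute)
  have "pmin / z1 ^ n \<le> p i * (1 / z1 ^ n)" using pmin_le[OF i(1)] z1 by (simp add: divide_right_mono)
  also have "\<dots> \<le> p i * gg n i" using g p_nonneg[OF i(1)] by (rule mult_left_mono)
  also have "\<dots> \<le> sA (Suc n)" by (rule sA_ge_gg[OF i(1)])
  finally show ?thesis .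
qed

end

lemma shift_pow: "(shift ^^ i) x = (\<lambda>n. x (n + i))"
  by (induction i arbitrary: x) (auto simp: shift_def)

context hs
begin

lemma SigmaA_shift: "x \<in> SigmaA N A \<Longrightarrow> (\<lambda>n. x (n + k)) \<in> SigmaA N A"
  unfolding SigmaA_def by auto

lemma succ_ex: "j < N \<Longrightarrow> \<exists>k. k < N \<and> A $$ (j,k) = 1"
proof (rule ccontr)
  assume j: "j < N" and "\<not> (\<exists>k. k < N \<and> A $$ (j,k) = 1)"
  then have "\<forall>k<N. \<not> P $$ (j,k) > 0" using P_pos_iff by blast
  then have "\<forall>k<N. P $$ (j,k) = 0" using P_nonneg j by (meson not_le order_antisym)
  then have "(\<Sum>k<N. P $$ (j,k)) = 0" by simp
  then show False using P_rowsum[OF j] by simp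
qed

definition sc :: "nat \<Rightarrow> nat" where "sc j = (SOME k. k < N \<and> A $$ (j,k) = 1)"

lemma sc: "j < N \<Longrightarrow> sc j < N \<and> A $$ (j, sc j) = 1"
  unfolding sc_def using someI_ex[OF succ_ex] by blast

lemma sc_pow: "j < N \<Longrightarrow> (sc ^^ m) j < N"
  by (induction m) (auto simp: sc)

lemma wt_nonzero_allowed:
  assumes w: "set w \<subseteq> {..<N}" "w \<noteq> []" and nz: "wt p P w \<noteq> 0"
  shows "allowed N A w"
proof -
  have mc: "markov_cyl p P w \<noteq> 0" using nz markov_cyl_wt by metis
  then have "(\<Prod>j<length w - 1. P $$ (w ! j, w ! (j+1))) \<noteq> 0" using w unfolding markov_cyl_def by auto
  then have pz: "\<And>j. j < length w - 1 \<Longrightarrow> P $$ (w ! j, w ! (j+1)) \<noteq> 0" by auto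
  have Aw: "A $$ (w ! j, w ! (Suc j)) = 1" if j: "Suc j < length w" for j
  proof -
    have wj: "w ! j < N" "w ! Suc j < N" using w j nth_mem by (metis Suc_lessD lessThan_iff subsetD)+
    have "P $$ (w ! j, w ! (j+1)) \<noteq> 0" using pz j by simp
    then have "P $$ (w ! j, w ! Suc j) > 0" using P_nonneg[OF wj] by simp
    then show ?thesis using P_pos_iff[OF wj] by simp
  qed
  have lw: "last w < N" using w last_in_set by blast
  define x where "x n = (if n < length w then w ! n else (sc ^^ (n + 1 - length w)) (last w))" for n
  have xN: "x n < N" for n
    using w sc_pow[OF lw] unfolding x_def by (auto intro: subsetD[OF w(1)] nth_mem)
  have xA: "A $$ (x n, x (Suc n)) = 1" for n
  proof (cases "Suc n < length w")
    case True then show ?thesis using Aw unfolding x_def by simp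
  next
    case False
    show ?thesis
    proof (cases "Suc n = length w")
      case True
      then have "x n = last w" unfolding x_def using w by (simp add: last_conv_nth del: One_nat_def) (metis diff_Suc_1)
      moreover have "x (Suc n) = sc (last w)" unfolding x_def using True by simp
      ultimately show ?thesis using sc[OF lw] by simp
    next
      case False2: False
      then have "n \<ge> length w" using False by simp
      then have "x (Suc n) = sc (x n)" unfolding x_def
        by (simp add: Suc_diff_le)
      then show ?thesis using sc[OF xN[of n]] by simp
    qed
  qed
  have "x \<in> SigmaA N A" unfolding SigmaA_def using xN xA by auto
  moreover have "\<forall>i<length w. x (0 + i) = w ! i" unfolding x_def by simp
  ultimately show ?thesis unfolding allowed_def by blast
qed

lemma allowed_cyl_ne: "allowed N A w \<Longrightarrow> \<exists>y. y \<in> cyl N A w"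
proof -
  assume "allowed N A w"
  then obtain x k where x: "x \<in> SigmaA N A" "\<forall>i<length w. x (k + i) = w ! i" unfolding allowed_def by blast
  have "(\<lambda>n. x (n + k)) \<in> cyl N A w" unfolding cyl_def using SigmaA_shift[OF x(1), of k] x(2) by (simp add: add.commute)
  then show ?thesis by blast
qed

lemma cyl_sub_iff:
  assumes w: "w \<in> W (m + r)" and al: "allowed N A w"
  shows "cyl N A w \<subseteq> survivors N A (cyl N A u) m \<longleftrightarrow> avoid w"
proof
  assume sub: "cyl N A w \<subseteq> survivors N A (cyl N A u) m"
  show "avoid w" unfolding avoid_def
  proof
    fix i show "\<not> occ w i"
    proof
      assume oc: "occ w i"
      then have ir: "i + r \<le> m + r" and tk: "take r (drop i w) = u" using w unfolding occ_def W_def by auto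
      obtain y where y: "y \<in> cyl N A w" using allowed_cyl_ne[OF al] by blast
      then have yS: "y \<in> SigmaA N A" and yw: "\<forall>k<length w. y k = w ! k" unfolding cyl_def by auto
      have "(shift ^^ i) y \<in> cyl N A u"
        unfolding cyl_def shift_pow
      proof (intro CollectI conjI allI impI)
        show "(\<lambda>n. y (n + i)) \<in> SigmaA N A" by (rule SigmaA_shift[OF yS])
        fix k assume k: "k < r"
        have "y (k + i) = w ! (i + k)" using yw k ir w unfolding W_def by (simp add: add.commute)
        also have "\<dots> = take r (drop i w) ! k" using k ir w unfolding W_def by simp
        finally show "y (k + i) = u ! k" using tk by simp
      qed
      moreover have "i \<le> m" using ir by simp
      ultimately have "y \<notin> survivors N A (cyl N A u) m" unfolding survivors_def by auto
      then show False using sub y by auto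
    qed
  qed
next
  assume av: "avoid w"
  show "cyl N A w \<subseteq> survivors N A (cyl N A u) m"
  proof
    fix y assume y: "y \<in> cyl N A w"
    then have yS: "y \<in> SigmaA N A" and yw: "\<forall>k<length w. y k = w ! k" unfolding cyl_def by auto
    have "(shift ^^ i) y \<notin> cyl N A u" if i: "i \<le> m" for i
    proof
      assume "(shift ^^ i) y \<in> cyl N A u"
      then have yu: "\<forall>k<r. y (k + i) = u ! k" unfolding cyl_def shift_pow by auto
      have "take r (drop i w) = u"
      proof (rule nth_equalityI)
        show "length (take r (drop i w)) = length u" using w i unfolding W_def by simp
        fix k assume "k < length (take r (drop i w))"
        then have k: "k < r" "i + k < length w" by auto
        then have "take r (drop i w) ! k = w ! (i + k)" by simp
        also have "\<dots> = y (k + i)" using yw k by (simp add: add.commute)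
        finally show "take r (drop i w) ! k = u ! k" using yu k by simp
      qed
      then have "occ w i" unfolding occ_def using w i unfolding W_def by simp
      then show False using av unfolding avoid_def by blast
    qed
    then show "y \<in> survivors N A (cyl N A u) m" unfolding survivors_def using yS by auto
  qed
qed

lemma measure_eq: "markov_measure_lvl N A p P (m + r) (survivors N A (cyl N A u) m) = sA (m + r)"
proof -
  let ?C = "\<lambda>w. allowed N A w \<and> cyl N A w \<subseteq> survivors N A (cyl N A u) m"
  have "markov_measure_lvl N A p P (m + r) (survivors N A (cyl N A u) m)
      = (\<Sum>w\<in>{w\<in>W (m + r). ?C w}. wt p P w)"
    unfolding markov_measure_lvl_def W_def markov_cyl_wt by (rule sum.cong) auto
  also have "\<dots> = (\<Sum>w\<in>W (m + r). if ?C w then wt p P w else 0)" by (simp add: sum.inter_filter)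
  also have "\<dots> = (\<Sum>w\<in>W (m + r). if avoid w then wt p P w else 0)"
  proof (rule sum.cong)
    fix w assume w: "w \<in> W (m + r)"
    show "(if ?C w then wt p P w else 0) = (if avoid w then wt p P w else 0)"
    proof (cases "wt p P w = 0")
      case False
      have "w \<noteq> []" "set w \<subseteq> {..<N}" using w r_ge2 unfolding W_def by auto
      then have "allowed N A w" using wt_nonzero_allowed False by blast
      then show ?thesis using cyl_sub_iff[OF w] by simp
    qed simp
  qed simp
  also have "\<dots> = sA (m + r)" unfolding sA_alt ..
  finally show ?thesis .
qed

end

context hs
begin

definition BB :: "real \<Rightarrow> real mat" where "BB z = 1\<^sub>m N - z \<cdot>\<^sub>m P"
definition DD :: "real \<Rightarrow> real" where "DD z = det (BB z)"
definition AD :: "real \<Rightarrow> real mat" where "AD z = adj_mat (BB z)"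

lemma BB_carrier: "BB z \<in> carrier_mat N N"
  unfolding BB_def using P_carrier by auto

lemma BB_entry: "i < N \<Longrightarrow> j < N \<Longrightarrow> BB z $$ (i,j) = (if i = j then 1 else 0) - z * P $$ (i,j)"
  unfolding BB_def using P_carrier by auto

lemma AD_carrier: "AD z \<in> carrier_mat N N"
  unfolding AD_def using adj_mat(1)[OF BB_carrier] .

lemma adj_right: "i < N \<Longrightarrow> k < N \<Longrightarrow> (\<Sum>j<N. BB z $$ (i,j) * AD z $$ (j,k)) = (if i = k then DD z else 0)"
proof -
  assume ik: "i < N" "k < N"
  have "(BB z * AD z) $$ (i,k) = (\<Sum>j<N. BB z $$ (i,j) * AD z $$ (j,k))"
    by (rule mult_mat_entry[OF BB_carrier AD_carrier ik])
  moreover have "BB z * AD z = DD z \<cdot>\<^sub>m 1\<^sub>m N" unfolding AD_def DD_def using adj_mat(2)[OF BB_carrier] .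
  ultimately show ?thesis using ik by (cases "i = k") auto
qed

lemma adj_left: "i < N \<Longrightarrow> k < N \<Longrightarrow> (\<Sum>j<N. AD z $$ (i,j) * BB z $$ (j,k)) = (if i = k then DD z else 0)"
proof -
  assume ik: "i < N" "k < N"
  have "(AD z * BB z) $$ (i,k) = (\<Sum>j<N. AD z $$ (i,j) * BB z $$ (j,k))"
    by (rule mult_mat_entry[OF AD_carrier BB_carrier ik])
  moreover have "AD z * BB z = DD z \<cdot>\<^sub>m 1\<^sub>m N" unfolding AD_def DD_def using adj_mat(3)[OF BB_carrier] .
  ultimately show ?thesis using ik by (cases "i = k") auto
qed

lemma f_eq: "f_u N P u z = tau_tilde P u z * DD z + z^(r-1) * delta * AD z $$ (last u, hd u)"
  unfolding f_u_def DD_def AD_def BB_def delta_def by simp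

lemma p_BB: "j < N \<Longrightarrow> (\<Sum>i<N. p i * BB z $$ (i,j)) = (1 - z) * p j"
proof -
  assume j: "j < N"
  have "(\<Sum>i<N. p i * BB z $$ (i,j)) = (\<Sum>i<N. p i * (if i = j then 1 else 0) - z * (p i * P $$ (i,j)))"
    by (rule sum.cong) (auto simp: BB_entry j right_diff_distrib)
  also have "\<dots> = (\<Sum>i<N. p i * (if i = j then 1 else 0)) - z * (\<Sum>i<N. p i * P $$ (i,j))"
    by (simp only: sum_subtractf sum_distrib_left)
  also have "\<dots> = p j - z * p j" using j p_stat[OF j] by (simp add: if_distrib cong: if_cong)
  finally show ?thesis by (simp add: left_diff_distrib)
qed

lemma p_adj: "k < N \<Longrightarrow> (1 - z) * (\<Sum>i<N. p i * AD z $$ (i,k)) = DD z * p k"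
proof -
  assume k: "k < N"
  have "(1 - z) * (\<Sum>i<N. p i * AD z $$ (i,k)) = (\<Sum>i<N. ((1 - z) * p i) * AD z $$ (i,k))"
    by (simp only: sum_distrib_left mult.assoc)
  also have "\<dots> = (\<Sum>i<N. (\<Sum>j<N. p j * BB z $$ (j,i)) * AD z $$ (i,k))"
    by (rule sum.cong) (simp_all add: p_BB)
  also have "\<dots> = (\<Sum>i<N. \<Sum>j<N. p j * BB z $$ (j,i) * AD z $$ (i,k))"
    by (simp only: sum_distrib_right)
  also have "\<dots> = (\<Sum>j<N. \<Sum>i<N. p j * BB z $$ (j,i) * AD z $$ (i,k))"
    by (rule sum.swap)
  also have "\<dots> = (\<Sum>j<N. p j * (\<Sum>i<N. BB z $$ (j,i) * AD z $$ (i,k)))"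
    by (simp only: sum_distrib_left mult.assoc)
  also have "\<dots> = (\<Sum>j<N. p j * (if j = k then DD z else 0))"
    by (rule sum.cong) (simp_all add: adj_right k)
  also have "\<dots> = DD z * p k" using k by (simp add: if_distrib cong: if_cong)
  finally show ?thesis .
qed

definition cv :: "real \<Rightarrow> bool" where "cv z \<longleftrightarrow> 0 \<le> z \<and> summable (\<lambda>n. sA (Suc n) * z ^ Suc n)"
definition GA :: "nat \<Rightarrow> real \<Rightarrow> real" where "GA j z = (\<Sum>n. a (Suc n) j * z ^ Suc n)"
definition GT :: "real \<Rightarrow> real" where "GT z = (\<Sum>n. t (Suc n) * z ^ Suc n)"
definition GS :: "real \<Rightarrow> real" where "GS z = (\<Sum>n. sA (Suc n) * z ^ Suc n)"

lemma cv_mono: assumes c: "cv z1" and z: "0 \<le> z" "z \<le> z1" shows "cv z"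
  unfolding cv_def
proof (intro conjI)
  show "summable (\<lambda>n. sA (Suc n) * z ^ Suc n)"
  proof (rule summable_comparison_test[of _ "\<lambda>n. sA (Suc n) * z1 ^ Suc n"])
    show "\<exists>N'. \<forall>n\<ge>N'. norm (sA (Suc n) * z ^ Suc n) \<le> sA (Suc n) * z1 ^ Suc n"
    proof (intro exI allI impI)
      fix n :: nat
      have "sA (Suc n) * z ^ Suc n \<le> sA (Suc n) * z1 ^ Suc n"
        by (rule mult_left_mono[OF power_mono]) (use z sA_nonneg in auto)
      then show "norm (sA (Suc n) * z ^ Suc n) \<le> sA (Suc n) * z1 ^ Suc n"
        using z sA_nonneg[of "Suc n"] by simp
    qed
    show "summable (\<lambda>n. sA (Suc n) * z1 ^ Suc n)" using c unfolding cv_def by auto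
  qed
qed (use z in auto)

lemma cv_small: assumes z: "0 \<le> z" "z < 1" shows "cv z"
  unfolding cv_def
proof (intro conjI)
  show "summable (\<lambda>n. sA (Suc n) * z ^ Suc n)"
  proof (rule summable_comparison_test[of _ "\<lambda>n. z ^ Suc n"])
    show "\<exists>N'. \<forall>n\<ge>N'. norm (sA (Suc n) * z ^ Suc n) \<le> z ^ Suc n"
      using z sA_le1 sA_nonneg by (auto simp: abs_mult intro!: mult_left_le_one_le)
    show "summable (\<lambda>n. z ^ Suc n)" using z by (simp add: summable_geometric)
  qed
qed (use z in auto)

lemma sum_a: assumes c: "cv z" and j: "j < N" shows "summable (\<lambda>n. a (Suc n) j * z ^ Suc n)"
proof (rule summable_comparison_test[of _ "\<lambda>n. sA (Suc n) * z ^ Suc n"])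
  have z: "z \<ge> 0" using c unfolding cv_def by auto
  show "\<exists>N'. \<forall>n\<ge>N'. norm (a (Suc n) j * z ^ Suc n) \<le> sA (Suc n) * z ^ Suc n"
  proof (intro exI allI impI)
    fix n :: nat
    have "a (Suc n) j * z ^ Suc n \<le> sA (Suc n) * z ^ Suc n"
      by (rule mult_right_mono[OF a_le]) (use z j in auto)
    then show "norm (a (Suc n) j * z ^ Suc n) \<le> sA (Suc n) * z ^ Suc n"
      using z a_nonneg[of "Suc n" j] by simp
  qed
  show "summable (\<lambda>n. sA (Suc n) * z ^ Suc n)" using c unfolding cv_def by auto
qed

lemma sum_t: "cv z \<Longrightarrow> summable (\<lambda>n. t (Suc n) * z ^ Suc n)"
proof -
  assume c: "cv z"
  then have z: "z \<ge> 0" and s: "summable (\<lambda>n. sA (Suc n) * z ^ Suc n)" unfolding cv_def by auto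
  have "summable (\<lambda>n. t (Suc (Suc n)) * z ^ Suc (Suc n))"
  proof (rule summable_comparison_test[of _ "\<lambda>n. z * (sA (Suc n) * z ^ Suc n)"])
    show "\<exists>N'. \<forall>n\<ge>N'. norm (t (Suc (Suc n)) * z ^ Suc (Suc n)) \<le> z * (sA (Suc n) * z ^ Suc n)"
    proof (intro exI allI impI)
      fix n :: nat
      have "t (Suc (Suc n)) * z ^ Suc (Suc n) \<le> sA (Suc n) * z ^ Suc (Suc n)"
        by (rule mult_right_mono[OF t_le]) (use z in auto)
      moreover have "t (Suc (Suc n)) * z ^ Suc (Suc n) \<ge> 0" using z t_nonneg by simp
      ultimately show "norm (t (Suc (Suc n)) * z ^ Suc (Suc n)) \<le> z * (sA (Suc n) * z ^ Suc n)"
        by (simp add: algebra_simps)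
    qed
    show "summable (\<lambda>n. z * (sA (Suc n) * z ^ Suc n))" using s by (rule summable_mult)
  qed
  then show ?thesis by (subst summable_Suc_iff[symmetric])
qed

lemma G1:
  assumes c: "cv z" and j: "j < N"
  shows "z * (\<Sum>i<N. GA i z * P $$ (i,j)) = GA j z - p j * z + (if j = last u then GT z else 0)"
proof -
  have sa: "\<And>i. i < N \<Longrightarrow> summable (\<lambda>n. a (Suc n) i * z ^ Suc n)" using sum_a[OF c] by blast
  have st: "summable (\<lambda>n. t (Suc n) * z ^ Suc n)" using sum_t[OF c] .
  have e1: "GA i z * P $$ (i,j) * z = (\<Sum>n. a (Suc n) i * z ^ Suc n * (z * P $$ (i,j)))" if i: "i < N" for i
  proof -
    have "GA i z * (z * P $$ (i,j)) = (\<Sum>n. a (Suc n) i * z ^ Suc n * (z * P $$ (i,j)))"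
      unfolding GA_def by (rule suminf_mult2[OF sa[OF i]])
    then show ?thesis by (simp add: mult.commute mult.left_commute)
  qed
  have "z * (\<Sum>i<N. GA i z * P $$ (i,j)) = (\<Sum>i<N. GA i z * P $$ (i,j) * z)"
    by (simp add: sum_distrib_right mult.commute[of z])
  also have "\<dots> = (\<Sum>i<N. \<Sum>n. a (Suc n) i * z ^ Suc n * (z * P $$ (i,j)))"
    by (rule sum.cong) (simp_all add: e1)
  also have "\<dots> = (\<Sum>n. \<Sum>i<N. a (Suc n) i * z ^ Suc n * (z * P $$ (i,j)))"
    by (rule suminf_sum[symmetric]) (rule summable_mult2[OF sa], simp)
  also have "\<dots> = (\<Sum>n. (\<Sum>i<N. a (Suc n) i * P $$ (i,j)) * z ^ Suc (Suc n))"
    by (rule arg_cong[where f=suminf], rule ext) (simp add: sum_distrib_left sum_distrib_right algebra_simps)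
  also have "\<dots> = (\<Sum>n. a (Suc (Suc n)) j * z ^ Suc (Suc n) + (if j = last u then t (Suc (Suc n)) * z ^ Suc (Suc n) else 0))"
    using rec_i[of "Suc _" j] j by (cases "j = last u") (simp_all add: algebra_simps)
  also have "\<dots> = (\<Sum>n. a (Suc (Suc n)) j * z ^ Suc (Suc n)) + (\<Sum>n. if j = last u then t (Suc (Suc n)) * z ^ Suc (Suc n) else 0)"
  proof (rule suminf_add[symmetric])
    show "summable (\<lambda>n. a (Suc (Suc n)) j * z ^ Suc (Suc n))"
      using sa[OF j] by (subst summable_Suc_iff[where f = "\<lambda>n. a (Suc n) j * z ^ Suc n"])
    show "summable (\<lambda>n. if j = last u then t (Suc (Suc n)) * z ^ Suc (Suc n) else 0)"
    proof -
      have st2: "summable (\<lambda>n. t (Suc (Suc n)) * z ^ Suc (Suc n))"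
        using st by (subst summable_Suc_iff[where f = "\<lambda>n. t (Suc n) * z ^ Suc n"])
      then show ?thesis by (cases "j = last u") auto
    qed
  qed
  also have "(\<Sum>n. a (Suc (Suc n)) j * z ^ Suc (Suc n)) = GA j z - p j * z"
    unfolding GA_def using suminf_split_head[OF sa[OF j]] a1[OF j] by simp
  also have "(\<Sum>n. if j = last u then t (Suc (Suc n)) * z ^ Suc (Suc n) else 0) = (if j = last u then GT z else 0)"
  proof (cases "j = last u")
    case True
    have "t (Suc 0) = 0" using t_small r_ge2 by simp
    then show ?thesis unfolding GT_def using True suminf_split_head[OF st] by simp
  qed simp
  finally show ?thesis .
qed

lemma G1': 
  assumes c: "cv z" and j: "j < N"
  shows "(\<Sum>i<N. GA i z * BB z $$ (i,j)) = p j * z - (if j = last u then GT z else 0)"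
proof -
  have "(\<Sum>i<N. GA i z * BB z $$ (i,j)) = (\<Sum>i<N. GA i z * (if i = j then 1 else 0)) - z * (\<Sum>i<N. GA i z * P $$ (i,j))"
    using j by (simp add: BB_entry right_diff_distrib sum_subtractf sum_distrib_left algebra_simps)
  also have "(\<Sum>i<N. GA i z * (if i = j then 1 else 0)) = GA j z" using j by (simp add: if_distrib cong: if_cong)
  finally show ?thesis using G1[OF c j] by simp
qed

lemma G3:
  assumes c: "cv z"
  shows "(1 - z) * GS z = z - GT z"
proof -
  have s: "summable (\<lambda>n. sA (Suc n) * z ^ Suc n)" using c unfolding cv_def by auto
  have st: "summable (\<lambda>n. t (Suc n) * z ^ Suc n)" using sum_t[OF c] .
  have s2: "summable (\<lambda>n. sA (Suc (Suc n)) * z ^ Suc (Suc n))"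
    using s by (subst summable_Suc_iff[where f = "\<lambda>n. sA (Suc n) * z ^ Suc n"])
  have st2: "summable (\<lambda>n. t (Suc (Suc n)) * z ^ Suc (Suc n))"
    using st by (subst summable_Suc_iff[where f = "\<lambda>n. t (Suc n) * z ^ Suc n"])
  have "GS z - z = (\<Sum>n. sA (Suc (Suc n)) * z ^ Suc (Suc n))"
    unfolding GS_def using suminf_split_head[OF s] sA1 by simp
  also have "\<dots> = (\<Sum>n. z * (sA (Suc n) * z ^ Suc n) - t (Suc (Suc n)) * z ^ Suc (Suc n))"
  proof -
    have r: "\<And>n. sA (Suc (Suc n)) = sA (Suc n) - t (Suc (Suc n))" using sA_rec by simp
    show ?thesis by (simp only: r) (simp add: algebra_simps)
  qed
  also have "\<dots> = z * GS z - (\<Sum>n. t (Suc (Suc n)) * z ^ Suc (Suc n))"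
    unfolding GS_def using suminf_diff[OF summable_mult[OF s] st2] suminf_mult[OF s] by simp
  also have "(\<Sum>n. t (Suc (Suc n)) * z ^ Suc (Suc n)) = GT z"
    unfolding GT_def using suminf_split_head[OF st] t_small[of 1] r_ge2 by simp
  finally show ?thesis by (simp add: algebra_simps)
qed

end

context hs
begin

lemma comb_rec:
  assumes n: "n \<ge> 1"
  shows "(a (Suc n) (hd u) + (if hd u = last u then t (Suc n) else 0)) * delta
       = (\<Sum>k\<in>{1..r}. if cc (r-k) then ds (r-k) * t (n+k) else 0)"
  using rec_ii'[OF n] rec_i[OF n hd_u_lt] by simp

lemma t_r_eq: "t r = p (hd u) * delta"
proof -
  have u: "u = hd u # tl u" using r_ge2 by (cases u) auto
  have "t r = wt p P u" by (rule t_r)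
  also have "\<dots> = p (hd u) * pw P (hd u) (tl u)" by (subst u) (simp add: wt_def)
  finally show ?thesis by (simp add: delta_pw)
qed

lemma cc0: "cc 0" unfolding cc_def autocorr_c_def by simp
lemma ds0: "ds 0 = 1" unfolding ds_def autocorr_delta_def by simp

lemma cc_last: "cc (r - 1) \<longleftrightarrow> hd u = last u"
proof -
  have "drop (r - 1) u = [last u]"
    using r_ge2 by (metis One_nat_def Suc_le_lessD append_butlast_last_id diff_Suc_1 drop_eq_Nil2
        length_butlast length_greater_0_conv drop_all le_numeral_extra(4) list.size(3) not_numeral_le_zero
        numeral_2_eq_2 order.trans append_eq_conv_conj)
  moreover have "take (r - (r - 1)) u = [hd u]"
    using r_ge2 by (cases u) auto
  ultimately show ?thesis unfolding cc_def autocorr_c_def by auto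
qed

lemma tau_reindex: "tau P u z = (\<Sum>k\<in>{1..r}. if cc (r-k) then ds (r-k) * z ^ (r-k) else 0)"
proof -
  have "tau P u z = (\<Sum>s<r. if cc s then ds s * z ^ s else 0)"
    unfolding tau_def cc_def ds_def by (rule sum.cong) auto
  also have "\<dots> = (\<Sum>k\<in>{1..r}. if cc (r-k) then ds (r-k) * z ^ (r-k) else 0)"
    by (rule sum.reindex_bij_witness[where i = "\<lambda>k. r - k" and j = "\<lambda>s. r - s"]) auto
  finally show ?thesis .
qed

lemma sum_t_shift:
  assumes c: "cv z" and k: "k \<in> {1..r}"
  shows "summable (\<lambda>m. t (Suc m + k) * z ^ (Suc m + k))"
    and "(\<Sum>m. t (Suc m + k) * z ^ (Suc m + k)) = GT z - (if k = r then t r * z ^ r else 0)"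
proof -
  let ?F = "\<lambda>n. t (Suc n) * z ^ Suc n"
  have st: "summable ?F" using sum_t[OF c] .
  show "summable (\<lambda>m. t (Suc m + k) * z ^ (Suc m + k))"
    using summable_ignore_initial_segment[OF st, of k] by simp
  have "GT z = (\<Sum>m. ?F (m + k)) + (\<Sum>i<k. ?F i)"
    unfolding GT_def by (rule suminf_split_initial_segment[OF st])
  moreover have "(\<Sum>i<k. ?F i) = (if k = r then t r * z ^ r else 0)"
  proof -
    have "(\<Sum>i<k. ?F i) = (\<Sum>i<k. if Suc i = r then t r * z ^ r else 0)"
    proof (rule sum.cong)
      fix i assume "i \<in> {..<k}"
      then have le: "Suc i \<le> r" using k by auto
      show "?F i = (if Suc i = r then t r * z ^ r else 0)"
      proof (cases "Suc i = r")
        case True show ?thesis unfolding True[symmetric] by simp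
      next
        case False then show ?thesis using t_small[of "Suc i"] le by simp
      qed
    qed simp
    also have "\<dots> = (if k = r then t r * z ^ r else 0)"
    proof (cases "k = r")
      case True
      then have "{..<k} = insert (r - 1) {..<r - 1}" using r_ge2 by auto
      then show ?thesis using True r_ge2 by (simp add: sum.insert)
    next
      case False
      then show ?thesis using k by (intro trans[OF sum.neutral]) auto
    qed
    finally show ?thesis .
  qed
  ultimately show "(\<Sum>m. t (Suc m + k) * z ^ (Suc m + k)) = GT z - (if k = r then t r * z ^ r else 0)"
    by (simp add: add.commute)
qed

lemma G2:
  assumes c: "cv z"
  shows "delta * z ^ (r - 1) * GA (hd u) z = tau_tilde P u z * GT z"
proof -
  let ?e = "hd u = last u"
  have z: "z \<ge> 0" using c unfolding cv_def by auto
  have sa: "summable (\<lambda>n. a (Suc n) (hd u) * z ^ Suc n)" using sum_a[OF c hd_u_lt] .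
  have st: "summable (\<lambda>n. t (Suc n) * z ^ Suc n)" using sum_t[OF c] .
  have sa2: "summable (\<lambda>m. a (Suc (Suc m)) (hd u) * z ^ Suc (Suc m))"
    using sa by (subst summable_Suc_iff[where f = "\<lambda>n. a (Suc n) (hd u) * z ^ Suc n"])
  have st2: "summable (\<lambda>m. t (Suc (Suc m)) * z ^ Suc (Suc m))"
    using st by (subst summable_Suc_iff[where f = "\<lambda>n. t (Suc n) * z ^ Suc n"])
  have r1: "r - 1 + Suc (Suc m) = Suc m + r" for m using r_ge2 by simp
  have E: "delta * z ^ (r - 1) * (a (Suc (Suc m)) (hd u) * z ^ Suc (Suc m) + (if ?e then t (Suc (Suc m)) * z ^ Suc (Suc m) else 0))
        = (\<Sum>k\<in>{1..r}. if cc (r-k) then ds (r-k) * z ^ (r-k) * (t (Suc m + k) * z ^ (Suc m + k)) else 0)" for m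
  proof -
    have pw: "z ^ (r - 1) * z ^ Suc (Suc m) = z ^ (Suc m + r)" by (metis power_add r1)
    have "delta * z ^ (r - 1) * (a (Suc (Suc m)) (hd u) * z ^ Suc (Suc m) + (if ?e then t (Suc (Suc m)) * z ^ Suc (Suc m) else 0))
        = delta * (z ^ (r - 1) * z ^ Suc (Suc m)) * (a (Suc (Suc m)) (hd u) + (if ?e then t (Suc (Suc m)) else 0))"
      by (cases ?e) (simp_all add: algebra_simps)
    also have "\<dots> = ((a (Suc (Suc m)) (hd u) + (if ?e then t (Suc (Suc m)) else 0)) * delta) * z ^ (Suc m + r)"
      unfolding pw by (simp add: algebra_simps)
    also have "\<dots> = (\<Sum>k\<in>{1..r}. if cc (r-k) then ds (r-k) * t (Suc m + k) else 0) * z ^ (Suc m + r)"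
      using comb_rec[of "Suc m"] by simp
    also have "\<dots> = (\<Sum>k\<in>{1..r}. if cc (r-k) then ds (r-k) * z ^ (r-k) * (t (Suc m + k) * z ^ (Suc m + k)) else 0)"
    proof -
      have pk: "z ^ (Suc m + r) = z ^ (r - k) * z ^ (Suc m + k)" if "k \<in> {1..r}" for k
      proof -
        have "r - k + (Suc m + k) = Suc m + r" using that by auto
        then show ?thesis by (metis power_add)
      qed
      show ?thesis unfolding sum_distrib_right
      proof (rule sum.cong)
        fix k assume k: "k \<in> {1..r}"
        show "(if cc (r-k) then ds (r-k) * t (Suc m + k) else 0) * z ^ (Suc m + r)
            = (if cc (r-k) then ds (r-k) * z ^ (r-k) * (t (Suc m + k) * z ^ (Suc m + k)) else 0)"
          unfolding pk[OF k] by simp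
      qed simp
    qed
    finally show ?thesis .
  qed
  have "delta * z ^ (r - 1) * ((GA (hd u) z - p (hd u) * z) + (if ?e then GT z else 0))
      = delta * z ^ (r - 1) * ((\<Sum>m. a (Suc (Suc m)) (hd u) * z ^ Suc (Suc m)) + (\<Sum>m. if ?e then t (Suc (Suc m)) * z ^ Suc (Suc m) else 0))"
  proof -
    have "(\<Sum>m. a (Suc (Suc m)) (hd u) * z ^ Suc (Suc m)) = GA (hd u) z - p (hd u) * z"
      unfolding GA_def using suminf_split_head[OF sa] a1[OF hd_u_lt] by simp
    moreover have "(\<Sum>m. if ?e then t (Suc (Suc m)) * z ^ Suc (Suc m) else 0) = (if ?e then GT z else 0)"
    proof (cases ?e)
      case True
      have "t (Suc 0) = 0" using t_small r_ge2 by simp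
      then show ?thesis unfolding GT_def using True suminf_split_head[OF st] by simp
    qed simp
    ultimately show ?thesis by simp
  qed
  also have "\<dots> = (\<Sum>m. delta * z ^ (r - 1) * (a (Suc (Suc m)) (hd u) * z ^ Suc (Suc m) + (if ?e then t (Suc (Suc m)) * z ^ Suc (Suc m) else 0)))"
  proof -
    have s2: "summable (\<lambda>m. if ?e then t (Suc (Suc m)) * z ^ Suc (Suc m) else 0)" using st2 by (cases ?e) auto
    show ?thesis
      by (subst suminf_add[OF sa2 s2]) (rule suminf_mult[symmetric], rule summable_add[OF sa2 s2])
  qed
  also have "\<dots> = (\<Sum>m. \<Sum>k\<in>{1..r}. if cc (r-k) then ds (r-k) * z ^ (r-k) * (t (Suc m + k) * z ^ (Suc m + k)) else 0)"
    by (simp only: E)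
  also have "\<dots> = (\<Sum>k\<in>{1..r}. \<Sum>m. if cc (r-k) then ds (r-k) * z ^ (r-k) * (t (Suc m + k) * z ^ (Suc m + k)) else 0)"
  proof (rule suminf_sum)
    fix k assume k: "k \<in> {1..r}"
    show "summable (\<lambda>m. if cc (r-k) then ds (r-k) * z ^ (r-k) * (t (Suc m + k) * z ^ (Suc m + k)) else 0)"
      using summable_mult[OF sum_t_shift(1)[OF c k]] by (cases "cc (r-k)") auto
  qed
  also have "\<dots> = (\<Sum>k\<in>{1..r}. if cc (r-k) then ds (r-k) * z ^ (r-k) * (GT z - (if k = r then t r * z ^ r else 0)) else 0)"
  proof (rule sum.cong)
    fix k assume k: "k \<in> {1..r}"
    show "(\<Sum>m. if cc (r-k) then ds (r-k) * z ^ (r-k) * (t (Suc m + k) * z ^ (Suc m + k)) else 0)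
        = (if cc (r-k) then ds (r-k) * z ^ (r-k) * (GT z - (if k = r then t r * z ^ r else 0)) else 0)"
      using suminf_mult[OF sum_t_shift(1)[OF c k]] sum_t_shift(2)[OF c k] by (cases "cc (r-k)") auto
  qed simp
  also have "\<dots> = (\<Sum>k\<in>{1..r}. if cc (r-k) then ds (r-k) * z ^ (r-k) else 0) * GT z
        - (\<Sum>k\<in>{1..r}. if k = r then t r * z ^ r else 0)"
  proof -
    have "(if cc (r-k) then ds (r-k) * z ^ (r-k) * (GT z - (if k = r then t r * z ^ r else 0)) else 0)
        = (if cc (r-k) then ds (r-k) * z ^ (r-k) else 0) * GT z - (if k = r then t r * z ^ r else 0)" if "k \<in> {1..r}" for k
      using cc0 ds0 by (cases "k = r") (auto simp: algebra_simps)
    then show ?thesis by (simp add: sum_subtractf sum_distrib_right)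
  qed
  also have "(\<Sum>k\<in>{1..r}. if k = r then t r * z ^ r else 0) = t r * z ^ r"
    using r_ge2 by simp
  finally have main: "delta * z ^ (r - 1) * ((GA (hd u) z - p (hd u) * z) + (if ?e then GT z else 0))
      = tau P u z * GT z - p (hd u) * delta * z ^ r"
    unfolding tau_reindex t_r_eq by simp
  have zr: "z ^ r = z ^ (r - 1) * z" using r_ge2 by (metis One_nat_def Suc_pred less_le_trans numeral_2_eq_2 pos2 power_Suc2)
  have "delta * z ^ (r - 1) * GA (hd u) z = tau P u z * GT z - delta * z ^ (r - 1) * (if ?e then GT z else 0)"
    using main by (simp add: algebra_simps zr)
  also have "\<dots> = tau_tilde P u z * GT z"
    unfolding tau_tilde_def using cc_last unfolding cc_def delta_def by (auto simp: algebra_simps)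
  finally show ?thesis .
qed

lemma A1:
  assumes c: "cv z"
  shows "GT z * f_u N P u z = delta * z ^ r * (\<Sum>i<N. p i * AD z $$ (i, hd u))"
proof -
  let ?k = "hd u"
  have "(\<Sum>j<N. (\<Sum>i<N. GA i z * BB z $$ (i,j)) * AD z $$ (j,?k)) = (\<Sum>i<N. GA i z * (\<Sum>j<N. BB z $$ (i,j) * AD z $$ (j,?k)))"
    by (simp only: sum_distrib_right sum_distrib_left mult.assoc) (rule sum.swap)
  also have "\<dots> = (\<Sum>i<N. GA i z * (if i = ?k then DD z else 0))"
    by (rule sum.cong) (simp_all add: adj_right hd_u_lt)
  also have "\<dots> = GA ?k z * DD z" using hd_u_lt by (simp add: if_distrib cong: if_cong)
  finally have e1: "(\<Sum>j<N. (\<Sum>i<N. GA i z * BB z $$ (i,j)) * AD z $$ (j,?k)) = GA ?k z * DD z" .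
  have "(\<Sum>j<N. (\<Sum>i<N. GA i z * BB z $$ (i,j)) * AD z $$ (j,?k))
      = (\<Sum>j<N. (p j * z - (if j = last u then GT z else 0)) * AD z $$ (j,?k))"
    by (rule sum.cong) (simp_all add: G1'[OF c])
  also have "\<dots> = (\<Sum>j<N. z * (p j * AD z $$ (j,?k)) - (if j = last u then GT z * AD z $$ (j,?k) else 0))"
    by (rule sum.cong) (auto simp: algebra_simps)
  also have "\<dots> = z * (\<Sum>j<N. p j * AD z $$ (j,?k)) - (\<Sum>j<N. (if j = last u then GT z * AD z $$ (j,?k) else 0))"
    by (simp only: sum_subtractf sum_distrib_left)
  also have "(\<Sum>j<N. (if j = last u then GT z * AD z $$ (j,?k) else 0)) = GT z * AD z $$ (last u, ?k)"
    using last_u_lt by simp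
  finally have eq1: "GA ?k z * DD z = z * (\<Sum>j<N. p j * AD z $$ (j,?k)) - GT z * AD z $$ (last u, ?k)"
    using e1 by simp
  have eq2: "delta * z ^ (r - 1) * GA ?k z = tau_tilde P u z * GT z" by (rule G2[OF c])
  have zr: "z ^ r = z ^ (r - 1) * z" using r_ge2 by (metis One_nat_def Suc_pred less_le_trans numeral_2_eq_2 pos2 power_Suc2)
  have "GT z * f_u N P u z = (tau_tilde P u z * GT z) * DD z + z ^ (r - 1) * delta * GT z * AD z $$ (last u, ?k)"
    unfolding f_eq by (simp add: algebra_simps)
  also have "\<dots> = delta * z ^ (r - 1) * (GA ?k z * DD z) + z ^ (r - 1) * delta * GT z * AD z $$ (last u, ?k)"
    unfolding eq2[symmetric] by (simp add: algebra_simps)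
  also have "\<dots> = delta * z ^ r * (\<Sum>i<N. p i * AD z $$ (i, ?k))"
    unfolding eq1 zr by (simp add: algebra_simps)
  finally show ?thesis .
qed

lemma A3:
  assumes c: "cv z"
  shows "(1 - z) * GT z * f_u N P u z = delta * z ^ r * DD z * p (hd u)"
proof -
  have "(1 - z) * GT z * f_u N P u z = delta * z ^ r * ((1 - z) * (\<Sum>i<N. p i * AD z $$ (i, hd u)))"
    using A1[OF c] by (simp add: algebra_simps)
  also have "\<dots> = delta * z ^ r * DD z * p (hd u)" using p_adj[OF hd_u_lt] by simp
  finally show ?thesis .
qed

end

lemma cont_det_fun:
  fixes M :: "real \<Rightarrow> real mat"
  assumes car: "\<And>z. M z \<in> carrier_mat n n"
    and ce: "\<And>i j. i < n \<Longrightarrow> j < n \<Longrightarrow> continuous_on UNIV (\<lambda>z. M z $$ (i,j))"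
  shows "continuous_on UNIV (\<lambda>z. det (M z))"
proof -
  have e: "(\<lambda>z. det (M z)) = (\<lambda>z. \<Sum>p\<in>{p. p permutes {0..<n}}. signof p * (\<Prod>i=0..<n. M z $$ (i, p i)))"
    by (rule ext) (rule det_def'[OF car])
  show ?thesis unfolding e
  proof (intro continuous_on_sum continuous_on_mult continuous_on_const continuous_on_prod)
    fix p i assume p: "p \<in> {p. p permutes {0..<n}}" and i: "i \<in> {0..<n}"
    then have "p i < n" using permutes_in_image[of p "{0..<n}" i] by auto
    then show "continuous_on UNIV (\<lambda>z. M z $$ (i, p i))" using ce i by auto
  qed
qed

context hs
begin

lemma delta_sum: "i < N \<Longrightarrow> (\<Sum>j<N. (if i = j then 1 else 0) * g j) = (g i :: real)"
proof -
  assume i: "i < N"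
  have "(\<Sum>j<N. (if i = j then 1 else 0) * g j) = (\<Sum>j<N. if i = j then g j else 0)" by (rule sum.cong) auto
  also have "\<dots> = g i" using i by simp
  finally show ?thesis .
qed

lemma md_entry: "i' < N - 1 \<Longrightarrow> j' < N - 1 \<Longrightarrow>
  mat_delete (BB z) j i $$ (i',j') = BB z $$ (if i' < j then i' else Suc i', if j' < i then j' else Suc j')"
proof -
  assume h: "i' < N - 1" "j' < N - 1"
  have "dim_row (BB z) = N" "dim_col (BB z) = N" using BB_carrier by auto
  then show ?thesis using h unfolding mat_delete_def by simp
qed

lemma BB_cont: "i < N \<Longrightarrow> j < N \<Longrightarrow> continuous_on UNIV (\<lambda>z. BB z $$ (i,j))"
proof -
  assume ij: "i < N" "j < N"
  have e: "(\<lambda>z. BB z $$ (i,j)) = (\<lambda>z. (if i = j then 1 else 0) - z * P $$ (i,j))"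
    using ij by (simp add: BB_entry)
  show ?thesis unfolding e by (intro continuous_intros)
qed

lemma DD_cont: "continuous_on UNIV DD"
  unfolding DD_def by (rule cont_det_fun[OF BB_carrier BB_cont])

lemma AD_entry: "i < N \<Longrightarrow> j < N \<Longrightarrow> AD z $$ (i,j) = (-1)^(j+i) * det (mat_delete (BB z) j i)"
proof -
  assume ij: "i < N" "j < N"
  have "dim_row (BB z) = N" "dim_col (BB z) = N" using BB_carrier by auto
  then show ?thesis using ij by (simp add: AD_def adj_mat_def cofactor_def)
qed

lemma AD_cont: "i < N \<Longrightarrow> j < N \<Longrightarrow> continuous_on UNIV (\<lambda>z. AD z $$ (i,j))"
proof -
  assume ij: "i < N" "j < N"
  have e: "(\<lambda>z. AD z $$ (i,j)) = (\<lambda>z. (-1)^(j+i) * det (mat_delete (BB z) j i))"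
    using ij by (simp add: AD_entry)
  have car: "\<And>z. mat_delete (BB z) j i \<in> carrier_mat (N-1) (N-1)" by (rule mat_delete_carrier[OF BB_carrier])
  have ce: "continuous_on UNIV (\<lambda>z. mat_delete (BB z) j i $$ (i',j'))" if "i' < N - 1" "j' < N - 1" for i' j'
  proof -
    have eq: "(\<lambda>z. mat_delete (BB z) j i $$ (i',j')) = (\<lambda>z. BB z $$ (if i' < j then i' else Suc i', if j' < i then j' else Suc j'))"
      using that by (simp add: md_entry)
    have b: "(if i' < j then i' else Suc i') < N" "(if j' < i then j' else Suc j') < N" using that by auto
    show ?thesis unfolding eq by (rule BB_cont[OF b])
  qed
  show ?thesis unfolding e by (intro continuous_intros cont_det_fun[OF car ce])
qed

lemma f_cont: "isCont (f_u N P u) z"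
proof -
  have "continuous_on UNIV (\<lambda>z. tau_tilde P u z * DD z + z^(r-1) * delta * AD z $$ (last u, hd u))"
    unfolding tau_tilde_def tau_def
    by (intro continuous_intros DD_cont AD_cont last_u_lt hd_u_lt)
  then have "continuous_on UNIV (f_u N P u)" using f_eq by presburger
  then show ?thesis by (simp add: continuous_on_eq_continuous_at)
qed

lemma DD_isCont: "isCont DD z" using DD_cont by (simp add: continuous_on_eq_continuous_at)

lemma PA_isCont: "isCont (\<lambda>z. \<Sum>i<N. p i * AD z $$ (i, hd u)) z"
proof -
  have "continuous_on UNIV (\<lambda>z. \<Sum>i<N. p i * AD z $$ (i, hd u))"
    by (intro continuous_intros AD_cont hd_u_lt) auto
  then show ?thesis by (simp add: continuous_on_eq_continuous_at)
qed

lemma delta_pos: "delta > 0"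
proof -
  obtain x k where x: "x \<in> SigmaA N A" "\<forall>i<r. x (k + i) = u ! i" using u_allowed unfolding allowed_def by blast
  have "P $$ (u ! (j-1), u ! j) > 0" if j: "j \<in> {1..<r}" for j
  proof -
    have "A $$ (x (k + (j-1)), x (Suc (k + (j-1)))) = 1" using x(1) unfolding SigmaA_def by auto
    moreover have "x (k + (j-1)) = u ! (j-1)"
    proof -
      have "j - 1 < r" using j by auto
      then show ?thesis using x(2) by blast
    qed
    moreover have "x (Suc (k + (j-1))) = u ! j"
    proof -
      have "Suc (k + (j-1)) = k + j" using j by auto
      then show ?thesis using x(2) j by auto
    qed
    ultimately have "A $$ (u ! (j-1), u ! j) = 1" by simp
    moreover have "u ! (j-1) \<in> set u" "u ! j \<in> set u" using j by (auto intro!: nth_mem)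
    then have "u ! (j-1) < N" "u ! j < N" using u_states by auto
    ultimately show ?thesis using P_pos_iff by blast
  qed
  then show ?thesis unfolding delta_def word_delta_def by (intro prod_pos) auto
qed

lemma DD1: "DD 1 = 0"
proof -
  let ?v = "vec N (\<lambda>_. 1::real)"
  have "?v \<noteq> 0\<^sub>v N" using N_pos by (metis index_vec index_zero_vec(1) zero_neq_one)
  moreover have "BB 1 *\<^sub>v ?v = 0\<^sub>v N"
  proof (rule eq_vecI)
    fix i assume "i < dim_vec (0\<^sub>v N :: real vec)"
    then have i: "i < N" by simp
    have "(BB 1 *\<^sub>v ?v) $ i = (\<Sum>k<N. BB 1 $$ (i,k) * ?v $ k)"
      by (rule mult_mat_vec_entry[OF BB_carrier _ i]) simp
    also have "\<dots> = (\<Sum>k<N. (if i = k then 1 else 0) - P $$ (i,k))" by (rule sum.cong) (simp_all add: BB_entry i)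
    also have "\<dots> = 0" using i P_rowsum[OF i] by (simp add: sum_subtractf)
    finally show "(BB 1 *\<^sub>v ?v) $ i = 0\<^sub>v N $ i" using i by simp
  qed (use BB_carrier in auto)
  ultimately have "\<exists>v. v \<in> carrier_vec N \<and> v \<noteq> 0\<^sub>v N \<and> BB 1 *\<^sub>v v = 0\<^sub>v N"
    by (intro exI[of _ ?v]) auto
  then show ?thesis unfolding DD_def using det_0_iff_vec_prod_zero[OF BB_carrier] by simp
qed

lemma adj1_col: assumes i: "i < N" and k: "k < N" shows "AD 1 $$ (i,k) = AD 1 $$ (k,k)"
proof (rule harm_const[where x = "\<lambda>i. AD 1 $$ (i,k)", OF _ i k])
  fix i assume i: "i < N"
  have "(\<Sum>j<N. BB 1 $$ (i,j) * AD 1 $$ (j,k)) = 0" using adj_right[OF i k] DD1 by simp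
  moreover have "(\<Sum>j<N. BB 1 $$ (i,j) * AD 1 $$ (j,k)) = (\<Sum>j<N. (if i = j then 1 else 0) * AD 1 $$ (j,k)) - (\<Sum>j<N. P $$ (i,j) * AD 1 $$ (j,k))"
    by (simp add: BB_entry i left_diff_distrib sum_subtractf)
  moreover have "(\<Sum>j<N. (if i = j then 1 else 0) * AD 1 $$ (j,k)) = AD 1 $$ (i,k)" using i by (rule delta_sum)
  ultimately show "AD 1 $$ (i,k) = (\<Sum>j<N. P $$ (i,j) * AD 1 $$ (j,k))" by simp
qed

lemma ins_idx: "j' < N - 1 \<Longrightarrow> insert_index k j' < N \<and> insert_index k j' \<noteq> k"
  by (auto simp: insert_index_def)

lemma del_idx: "j < N \<Longrightarrow> j \<noteq> k \<Longrightarrow> k < N \<Longrightarrow> delete_index k j < N - 1"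
  by (auto simp: delete_index_def)

lemma sum_skip:
  assumes k: "k < N"
  shows "(\<Sum>j<N. if j = k then 0 else g j) = (\<Sum>j'<N-1. g (insert_index k j'))"
proof -
  have "(\<Sum>j<N. if j = k then 0 else g j) = (\<Sum>j\<in>{j\<in>{..<N}. j \<noteq> k}. g j)"
    unfolding sum.inter_filter[OF finite_lessThan] by (rule sum.cong) auto
  also have "\<dots> = (\<Sum>j'<N-1. g (insert_index k j'))"
  proof (rule sum.reindex_bij_witness[where i = "insert_index k" and j = "delete_index k"])
    fix a assume "a \<in> {j\<in>{..<N}. j \<noteq> k}"
    then have a: "a < N" "a \<noteq> k" by auto
    show "insert_index k (delete_index k a) = a" using a by (simp add: insert_delete_index)
    show "delete_index k a \<in> {..<N-1}" using del_idx[OF a k] by simp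
    show "g (insert_index k (delete_index k a)) = g a" using a by (simp add: insert_delete_index)
  next
    fix b assume "b \<in> {..<N-1}"
    then have b: "b < N - 1" by simp
    show "delete_index k (insert_index k b) = b" by simp
    show "insert_index k b \<in> {j\<in>{..<N}. j \<noteq> k}" using ins_idx[OF b, of k] by simp
  qed
  finally show ?thesis .
qed

lemma adj1_diag: assumes k: "k < N" shows "AD 1 $$ (k,k) \<noteq> 0"
proof
  assume h: "AD 1 $$ (k,k) = 0"
  let ?M = "mat_delete (BB 1) k k"
  have Mc: "?M \<in> carrier_mat (N-1) (N-1)" by (rule mat_delete_carrier[OF BB_carrier])
  have "AD 1 $$ (k,k) = det ?M"
    using k by (simp add: AD_entry neg_one_even_power)
  then have "det ?M = 0" using h by simp
  then obtain y where y: "y \<in> carrier_vec (N-1)" "y \<noteq> 0\<^sub>v (N-1)" "?M *\<^sub>v y = 0\<^sub>v (N-1)"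
    using det_0_iff_vec_prod_zero[OF Mc] by auto
  define x where "x i = (if i = k then 0 else y $ delete_index k i)" for i
  have NS: "N = Suc (N - 1)" using N_pos by simp
  have Mentry: "?M $$ (i',j') = BB 1 $$ (insert_index k i', insert_index k j')" if "i' < N - 1" "j' < N - 1" for i' j'
    using mat_delete_index[of "BB 1" "N-1" k k i' j'] BB_carrier k that NS by simp
  have harm: "x i = (\<Sum>j<N. P $$ (i,j) * x j)" if i: "i < N" "i \<noteq> k" for i
  proof -
    have di: "delete_index k i < N - 1" using i k by (auto simp: delete_index_def)
    have ii: "insert_index k (delete_index k i) = i" using i by (simp add: insert_delete_index)
    have "0 = (?M *\<^sub>v y) $ delete_index k i" using y(3) di by simp
    also have "\<dots> = (\<Sum>j'<N-1. ?M $$ (delete_index k i, j') * y $ j')"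
      by (rule mult_mat_vec_entry[OF Mc y(1) di])
    also have "\<dots> = (\<Sum>j'<N-1. BB 1 $$ (i, insert_index k j') * x (insert_index k j'))"
    proof (rule sum.cong)
      fix j' assume "j' \<in> {..<N-1}"
      then have j': "j' < N - 1" by simp
      show "?M $$ (delete_index k i, j') * y $ j' = BB 1 $$ (i, insert_index k j') * x (insert_index k j')"
        using ins_idx[OF j', of k] by (simp add: Mentry[OF di j'] ii x_def)
    qed simp
    also have "\<dots> = (\<Sum>j<N. if j = k then 0 else BB 1 $$ (i, j) * x j)" by (rule sum_skip[OF k, symmetric])
    also have "\<dots> = (\<Sum>j<N. BB 1 $$ (i, j) * x j)" by (rule sum.cong) (auto simp: x_def)
    also have "\<dots> = (\<Sum>j<N. (if i = j then 1 else 0) * x j) - (\<Sum>j<N. P $$ (i,j) * x j)"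
      by (simp add: BB_entry i left_diff_distrib sum_subtractf)
    also have "(\<Sum>j<N. (if i = j then 1 else 0) * x j) = x i" using i(1) by (rule delta_sum)
    finally show ?thesis by simp
  qed
  have x0: "\<And>i. i < N \<Longrightarrow> x i = 0"
    using harm_zero[of k x, OF k _ harm] by (simp add: x_def)
  have "y = 0\<^sub>v (N-1)"
  proof (rule eq_vecI)
    fix j' assume "j' < dim_vec (0\<^sub>v (N - 1) :: real vec)"
    then have j': "j' < N - 1" by simp
    have ii: "insert_index k j' < N" "insert_index k j' \<noteq> k" using ins_idx[OF j'] by auto
    then have "x (insert_index k j') = 0" using x0 by simp
    moreover have "x (insert_index k j') = y $ j'" using ii unfolding x_def by simp
    ultimately show "y $ j' = 0\<^sub>v (N-1) $ j'" using j' by simp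
  qed (use y in auto)
  then show False using y(2) by simp
qed

lemma f1: "f_u N P u 1 = delta * AD 1 $$ (hd u, hd u)"
proof -
  have "f_u N P u 1 = tau_tilde P u 1 * DD 1 + 1^(r-1) * delta * AD 1 $$ (last u, hd u)" by (rule f_eq)
  also have "AD 1 $$ (last u, hd u) = AD 1 $$ (hd u, hd u)" by (rule adj1_col[OF last_u_lt hd_u_lt])
  finally show ?thesis by (simp only: DD1) simp
qed

lemma f1_ne: "f_u N P u 1 \<noteq> 0"
  unfolding f1 using delta_pos adj1_diag[OF hd_u_lt] by simp

lemma PA1: "(\<Sum>i<N. p i * AD 1 $$ (i, hd u)) = AD 1 $$ (hd u, hd u)"
proof -
  have "(\<Sum>i<N. p i * AD 1 $$ (i, hd u)) = (\<Sum>i<N. p i * AD 1 $$ (hd u, hd u))"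
  proof (rule sum.cong)
    fix i assume "i \<in> {..<N}"
    then have "AD 1 $$ (i, hd u) = AD 1 $$ (hd u, hd u)" using adj1_col[OF _ hd_u_lt] by simp
    then show "p i * AD 1 $$ (i, hd u) = p i * AD 1 $$ (hd u, hd u)" by (simp only:)
  qed simp
  also have "\<dots> = AD 1 $$ (hd u, hd u)" using p_sum by (simp add: sum_distrib_right[symmetric])
  finally show ?thesis .
qed

end

context hs
begin

lemma sA_antimono:
  assumes m1: "1 \<le> m" and mn: "m \<le> n"
  shows "sA n \<le> sA m"
  using mn
proof (induction n rule: dec_induct)
  case base then show ?case by simp
next
  case (step n) then show ?case using sA_mono[of n] m1 by simp
qed

lemma sA_pow:
  assumes k: "k \<ge> 1" and q: "q \<ge> 1"
  shows "sA (q * k) \<le> pmin * (sA k / pmin) ^ q"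
  using q
proof (induction q rule: nat_induct_at_least)
  case base then show ?case using pmin_pos by simp
next
  case (Suc q)
  have "sA (Suc q * k) = sA (q * k + k)" by (simp add: add.commute)
  also have "\<dots> \<le> sA (q * k) * sA k / pmin" by (rule submult) (use Suc k in auto)
  also have "\<dots> \<le> pmin * (sA k / pmin) ^ q * sA k / pmin"
    using Suc.IH sA_nonneg pmin_pos by (intro divide_right_mono mult_right_mono) auto
  also have "\<dots> = pmin * (sA k / pmin) ^ Suc q" using pmin_pos by (simp add: field_simps)
  finally show ?case .
qed

lemma geomE:
  assumes rho: "\<rho> > 0" and k: "k \<ge> 1" and lt: "sA k < pmin * \<rho> ^ k"
  shows "\<exists>z > 1 / \<rho>. cv z"
proof (cases "1 / \<rho> < 1")
  case True
  have a: "1/\<rho> < (1/\<rho> + 1)/2" "(1/\<rho> + 1)/2 < 1" using True by simp_all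
  have b: "0 \<le> (1/\<rho> + 1)/2" using rho by simp
  show ?thesis using a b cv_small by blast
next
  case False
  then have rho1: "\<rho> \<le> 1" using rho by (simp add: field_simps)
  define c where "c = sA k / pmin"
  have c0: "c \<ge> 0" unfolding c_def using sA_nonneg pmin_pos by simp
  have crho: "c < \<rho> ^ k" unfolding c_def using lt pmin_pos by (simp add: divide_less_eq mult.commute)
  define \<beta> where "\<beta> = root k c"
  have b0: "\<beta> \<ge> 0" unfolding \<beta>_def using c0 by (rule real_root_ge_zero)
  have bk: "\<beta> ^ k = c" unfolding \<beta>_def using c0 k by simp
  have brho: "\<beta> < \<rho>" using power_less_imp_less_base[of \<beta> k \<rho>] bk crho rho by simp
  define z where "z = 2 / (\<beta> + \<rho>)"
  have zgt: "z > 1 / \<rho>" unfolding z_def using brho b0 rho by (simp add: field_simps)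
  have z1: "z \<ge> 1" using zgt False by simp
  define \<theta> where "\<theta> = z * \<beta>"
  have th0: "\<theta> \<ge> 0" unfolding \<theta>_def using z1 b0 by simp
  have th1: "\<theta> < 1" unfolding \<theta>_def z_def using brho b0 rho by (simp add: field_simps)
  have bound: "sA (Suc n) * z ^ Suc n \<le> pmin * z ^ k * \<theta> ^ (Suc n - k)" if n: "n \<ge> k" for n
  proof -
    define q where "q = Suc n div k"
    have q1: "q \<ge> 1"
    proof -
      have "k div k \<le> Suc n div k" using n by (intro div_le_mono) simp
      then show ?thesis unfolding q_def using k by simp
    qed
    have dm: "q * k + Suc n mod k = Suc n" unfolding q_def by (rule div_mult_mod_eq)
    have ml: "Suc n mod k < k" using k by simp
    have qk: "q * k \<le> Suc n" using dm by linarith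
    have qk2: "Suc n < (q + 1) * k" using dm ml by (simp add: algebra_simps)
    have "sA (Suc n) \<le> sA (q * k)" by (rule sA_antimono) (use q1 k qk in \<open>auto simp: one_le_mult_iff\<close>)
    also have "\<dots> \<le> pmin * c ^ q" using sA_pow[OF k q1] unfolding c_def .
    also have "c ^ q = \<beta> ^ (k * q)" using bk by (simp add: power_mult)
    finally have s1: "sA (Suc n) \<le> pmin * \<beta> ^ (k * q)" .
    have z2: "z ^ Suc n \<le> z ^ (k * q) * z ^ k"
    proof -
      have "z ^ Suc n \<le> z ^ ((q + 1) * k)" by (rule power_increasing) (use qk2 z1 in auto)
      also have "\<dots> = z ^ (k * q) * z ^ k" by (simp add: algebra_simps power_add)
      finally show ?thesis .
    qed
    have "sA (Suc n) * z ^ Suc n \<le> pmin * \<beta> ^ (k * q) * (z ^ (k * q) * z ^ k)"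
      by (rule mult_mono[OF s1 z2]) (use z1 pmin_pos b0 in auto)
    also have "\<dots> = pmin * z ^ k * \<theta> ^ (k * q)" unfolding \<theta>_def by (simp add: power_mult_distrib algebra_simps)
    also have "\<theta> ^ (k * q) \<le> \<theta> ^ (Suc n - k)"
      by (rule power_decreasing) (use qk2 th0 th1 in \<open>auto simp: algebra_simps\<close>)
    then have "pmin * z ^ k * \<theta> ^ (k * q) \<le> pmin * z ^ k * \<theta> ^ (Suc n - k)"
      using pmin_pos z1 by (intro mult_left_mono) auto
    finally show ?thesis .
  qed
  have sg: "summable (\<lambda>n. pmin * z ^ k * \<theta> ^ (Suc n - k))"
  proof -
    have "summable (\<lambda>n. pmin * z ^ k * \<theta> ^ (Suc (n + k) - k))"
    proof -
      have "summable (\<lambda>n. pmin * z ^ k * (\<theta> * \<theta> ^ n))"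
        using th0 th1 by (intro summable_mult summable_geometric) simp
      moreover have "Suc (n + k) - k = Suc n" for n by simp
      ultimately show ?thesis by simp
    qed
    then show ?thesis by (subst summable_iff_shift[symmetric, of _ k])
  qed
  have "cv z" unfolding cv_def
  proof (intro conjI)
    show "0 \<le> z" using z1 by simp
    show "summable (\<lambda>n. sA (Suc n) * z ^ Suc n)"
    proof (rule summable_comparison_test'[OF sg])
      fix n assume "k \<le> n"
      then show "norm (sA (Suc n) * z ^ Suc n) \<le> pmin * z ^ k * \<theta> ^ (Suc n - k)"
        using bound[of n] sA_nonneg[of "Suc n"] z1 by simp
    qed
  qed
  then show ?thesis using zgt by blast
qed

lemma pmin_le1: "pmin \<le> 1"
proof -
  have "pmin \<le> p (hd u)" by (rule pmin_le[OF hd_u_lt])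
  also have "p (hd u) \<le> (\<Sum>i<N. p i)" by (rule member_le_sum) (use hd_u_lt p_nonneg in auto)
  finally show ?thesis using p_sum by simp
qed

lemma cv_gt1: "\<exists>z>1. cv z"
proof (rule ccontr)
  assume no: "\<not> (\<exists>z>1. cv z)"
  have lb: "pmin \<le> sA k" if k: "k \<ge> 1" for k
  proof (rule ccontr)
    assume "\<not> pmin \<le> sA k"
    then have "sA k < pmin * 1 ^ k" by simp
    then show False using geomE[of 1 k] k no by auto
  qed
  have GTle: "GT z \<le> 1 - pmin" if z: "0 < z" "z < 1" for z
  proof -
    have c: "cv z" using z by (intro cv_small) auto
    have sg: "summable (\<lambda>n. pmin * z ^ Suc n)"
      using z by (intro summable_mult) (simp add: summable_geometric)
    have "(\<Sum>n. pmin * z ^ Suc n) = pmin * (z * (1 / (1 - z)))"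
    proof -
      have "(\<Sum>n. pmin * z ^ Suc n) = pmin * (\<Sum>n. z ^ Suc n)"
        by (rule suminf_mult) (use z in \<open>simp add: summable_geometric\<close>)
      also have "(\<lambda>n. z ^ Suc n) = (\<lambda>n. z * z ^ n)" by simp
      also have "(\<Sum>n. z * z ^ n) = z * (\<Sum>n. z ^ n)" using z by (intro suminf_mult summable_geometric) simp
      also have "(\<Sum>n. z ^ n) = 1 / (1 - z)" using z by (intro suminf_geometric) simp
      finally show ?thesis by simp
    qed
    moreover have "(\<Sum>n. pmin * z ^ Suc n) \<le> GS z"
      unfolding GS_def
      using lb z c unfolding cv_def by (intro suminf_le sg) (auto intro!: mult_right_mono)
    ultimately have "pmin * z / (1 - z) \<le> GS z" by simp
    then have "pmin * z \<le> (1 - z) * GS z" using z by (simp add: field_simps)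
    then have "GT z \<le> z - pmin * z" using G3[OF c] by simp
    also have "\<dots> = z * (1 - pmin)" by (simp add: algebra_simps)
    also have "\<dots> \<le> 1 * (1 - pmin)" using z pmin_le1 by (intro mult_right_mono) auto
    finally show ?thesis by simp
  qed
  define PA where "PA z = (\<Sum>i<N. p i * AD z $$ (i, hd u))" for z
  define h where "h z = delta * z ^ r * PA z / f_u N P u z" for z
  have hc: "isCont h 1" unfolding h_def PA_def
    by (intro continuous_intros PA_isCont f_cont f1_ne)
  have h1: "h 1 = 1" unfolding h_def PA_def using PA1 f1 f1_ne by simp
  have hl: "(h \<longlongrightarrow> 1) (at_left 1)"
    using tendsto_mono[OF at_le[OF subset_UNIV] hc[unfolded isCont_def]] h1 by simp
  have ev1: "eventually (\<lambda>z. f_u N P u z \<noteq> 0) (at_left 1)"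
  proof -
    have "(f_u N P u \<longlongrightarrow> f_u N P u 1) (at_left 1)"
      using tendsto_mono[OF at_le[OF subset_UNIV] f_cont[unfolded isCont_def]] by simp
    then show ?thesis using f1_ne tendsto_imp_eventually_ne by blast
  qed
  have ev2: "eventually (\<lambda>z. z \<in> {0<..<1}) (at_left (1::real))" by (rule eventually_at_left_real) simp
  have "eventually (\<lambda>z. h z \<le> 1 - pmin) (at_left 1)"
    using ev1 ev2
  proof eventually_elim
    case (elim z)
    then have z: "0 < z" "z < 1" and fz: "f_u N P u z \<noteq> 0" by auto
    have c: "cv z" using z by (intro cv_small) auto
    have "GT z = h z" unfolding h_def PA_def using A1[OF c] fz by (simp add: field_simps)
    then show ?case using GTle[OF z] by simp
  qed
  then have "1 \<le> 1 - pmin" using tendsto_upperbound[OF hl] by simp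
  then show False using pmin_pos by simp
qed

end

context hs
begin

lemma GT_pos: assumes c: "cv z" and z: "z > 0" shows "GT z > 0"
proof -
  let ?F = "\<lambda>n. t (Suc n) * z ^ Suc n"
  have st: "summable ?F" using sum_t[OF c] .
  have "sum ?F {r - 1} \<le> GT z" unfolding GT_def
    by (rule sum_le_suminf[OF st]) (use z t_nonneg in auto)
  moreover have "sum ?F {r - 1} = t r * z ^ r"
  proof -
    have e: "Suc (r - 1) = r" using r_ge2 by simp
    have "sum ?F {r - 1} = ?F (r - 1)" by simp
    also have "\<dots> = t r * z ^ r" by (simp only: e)
    finally show ?thesis .
  qed
  moreover have "t r * z ^ r > 0" unfolding t_r_eq using p_pos[OF hd_u_lt] delta_pos z by simp
  ultimately show ?thesis by simp
qed

lemma noA: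
  assumes z0: "z0 > 0" and root: "f_u N P u z0 = 0"
  shows "\<not> (\<exists>z1>z0. cv z1)"
proof
  assume "\<exists>z1>z0. cv z1"
  then obtain z1 where z1: "z1 > z0" "cv z1" by blast
  have c0: "cv z0" using cv_mono[OF z1(2)] z0 z1 by simp
  have "delta * z0 ^ r * DD z0 * p (hd u) = 0" using A3[OF c0] root by simp
  then have D0: "DD z0 = 0" using delta_pos z0 p_pos[OF hd_u_lt] by simp
  have z01: "z0 \<noteq> 1" using root f1_ne by auto
  obtain v where v: "v \<in> carrier_vec N" "v \<noteq> 0\<^sub>v N" "BB z0 *\<^sub>v v = 0\<^sub>v N"
    using D0 det_0_iff_vec_prod_zero[OF BB_carrier] unfolding DD_def by auto
  define x where "x i = v $ i" for i
  have Bx: "(\<Sum>k<N. BB z0 $$ (i,k) * x k) = 0" if i: "i < N" for i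
  proof -
    have "(BB z0 *\<^sub>v v) $ i = (\<Sum>k<N. BB z0 $$ (i,k) * v $ k)"
      by (rule mult_mat_vec_entry[OF BB_carrier v(1) i])
    then show ?thesis using v(3) i unfolding x_def by simp
  qed
  have eig: "x i = z0 * (\<Sum>k<N. P $$ (i,k) * x k)" if i: "i < N" for i
  proof -
    have "(\<Sum>k<N. BB z0 $$ (i,k) * x k) = (\<Sum>k<N. (if i = k then 1 else 0) * x k) - z0 * (\<Sum>k<N. P $$ (i,k) * x k)"
      by (simp add: BB_entry i left_diff_distrib sum_subtractf sum_distrib_left mult.assoc)
    then show ?thesis using Bx[OF i] delta_sum[OF i, of x] by simp
  qed
  have pair1: "(\<Sum>j<N. (\<Sum>i<N. GA i z0 * BB z0 $$ (i,j)) * x j) = 0"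
  proof -
    have "(\<Sum>j<N. (\<Sum>i<N. GA i z0 * BB z0 $$ (i,j)) * x j) = (\<Sum>i<N. GA i z0 * (\<Sum>j<N. BB z0 $$ (i,j) * x j))"
      by (simp only: sum_distrib_right sum_distrib_left mult.assoc) (rule sum.swap)
    also have "\<dots> = 0" using Bx by simp
    finally show ?thesis .
  qed
  have pair2: "(\<Sum>j<N. (\<Sum>i<N. p i * BB z0 $$ (i,j)) * x j) = 0"
  proof -
    have "(\<Sum>j<N. (\<Sum>i<N. p i * BB z0 $$ (i,j)) * x j) = (\<Sum>i<N. p i * (\<Sum>j<N. BB z0 $$ (i,j) * x j))"
      by (simp only: sum_distrib_right sum_distrib_left mult.assoc) (rule sum.swap)
    also have "\<dots> = 0" using Bx by simp
    finally show ?thesis .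
  qed
  have "(\<Sum>j<N. (\<Sum>i<N. p i * BB z0 $$ (i,j)) * x j) = (1 - z0) * (\<Sum>j<N. p j * x j)"
    by (simp add: p_BB sum_distrib_left mult.assoc)
  then have px: "(\<Sum>j<N. p j * x j) = 0" using pair2 z01 by simp
  have "(\<Sum>j<N. (\<Sum>i<N. GA i z0 * BB z0 $$ (i,j)) * x j) = (\<Sum>j<N. (p j * z0 - (if j = last u then GT z0 else 0)) * x j)"
    by (rule sum.cong) (simp_all add: G1'[OF c0])
  also have "\<dots> = (\<Sum>j<N. z0 * (p j * x j) - (if j = last u then GT z0 * x j else 0))"
    by (rule sum.cong) (auto simp: algebra_simps)
  also have "\<dots> = z0 * (\<Sum>j<N. p j * x j) - GT z0 * x (last u)"
    using last_u_lt by (simp add: sum_subtractf sum_distrib_left)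
  finally have "GT z0 * x (last u) = 0" using pair1 px by simp
  then have xl: "x (last u) = 0" using GT_pos[OF c0 z0] by simp
  obtain i0 where i0: "i0 < N" "x i0 \<noteq> 0"
  proof (rule ccontr)
    assume "\<not> thesis"
    then have "\<forall>i<N. x i = 0" using that by blast
    then have "v = 0\<^sub>v N" using v(1) unfolding x_def by (intro eq_vecI) auto
    then show False using v(2) by simp
  qed
  have lowb: "pmin / z0 ^ n \<le> sA (Suc n)" for n by (rule eig_lower[OF z0 eig xl i0])
  have "(\<lambda>n. sA (Suc n) * z1 ^ Suc n) \<longlonglongrightarrow> 0"
    using z1(2) unfolding cv_def by (auto intro: summable_LIMSEQ_zero)
  then have "eventually (\<lambda>n. sA (Suc n) * z1 ^ Suc n < pmin * z1) sequentially"
    using pmin_pos z0 z1 by (intro order_tendstoD(2)) auto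
  then obtain n where n: "sA (Suc n) * z1 ^ Suc n < pmin * z1" by (auto simp: eventually_sequentially)
  have "1 \<le> (z1 / z0) ^ n" using z0 z1 by (intro one_le_power) (simp add: field_simps)
  then have "pmin * z1 \<le> pmin * z1 * (z1 / z0) ^ n"
  proof -
    have "0 < pmin * z1" using z0 z1 pmin_pos by simp
    then show ?thesis using \<open>1 \<le> (z1 / z0) ^ n\<close> by (simp add: mult_le_cancel_left1)
  qed
  also have "\<dots> = pmin / z0 ^ n * z1 ^ Suc n" using z0 by (simp add: field_simps power_divide)
  also have "\<dots> \<le> sA (Suc n) * z1 ^ Suc n" using lowb[of n] z1 z0 by (intro mult_right_mono) auto
  finally show False using n by simp
qed

end

context hs
begin

lemma lowerL:
  assumes z0: "z0 > 0" and root: "f_u N P u z0 = 0" and k: "k \<ge> 1"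
  shows "pmin * (1 / z0) ^ k \<le> sA k"
proof (rule ccontr)
  assume "\<not> pmin * (1 / z0) ^ k \<le> sA k"
  then have "sA k < pmin * (1 / z0) ^ k" by simp
  then obtain z where "z > 1 / (1 / z0)" "cv z" using geomE[of "1/z0" k] z0 k by auto
  then show False using noA[OF z0 root] by simp
qed

lemma upperU:
  assumes z0: "z0 > 0" and least: "\<And>z. z > 0 \<Longrightarrow> f_u N P u z = 0 \<Longrightarrow> z0 \<le> z"
    and z2: "0 \<le> z2" "z2 < z0"
  shows "cv z2"
proof (rule ccontr)
  assume ncv: "\<not> cv z2"
  define S where "S = {z. cv z}"
  define R where "R = Sup S"
  have S0: "0 \<in> S" unfolding S_def using cv_small by simp
  have Sb: "z \<le> z2" if "z \<in> S" for z
  proof (rule ccontr)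
    assume "\<not> z \<le> z2"
    then have "cv z2" using cv_mono[of z z2] that z2 unfolding S_def by simp
    then show False using ncv by simp
  qed
  have bdd: "bdd_above S" unfolding bdd_above_def using Sb by blast
  have Rle: "R \<le> z2" unfolding R_def using S0 Sb by (intro cSup_least) auto
  obtain z1 where z1: "z1 > 1" "cv z1" using cv_gt1 by blast
  have R1: "R > 1"
  proof -
    have "z1 \<le> R" unfolding R_def using z1 bdd by (intro cSup_upper) (auto simp: S_def)
    then show ?thesis using z1 by simp
  qed
  have below: "cv z" if zz: "0 \<le> z" "z < R" for z
  proof -
    have "\<exists>x\<in>S. z < x" using zz less_cSup_iff[of S z] S0 bdd unfolding R_def by auto
    then obtain x where "x \<in> S" "z < x" by blast
    then show ?thesis using cv_mono[of x z] zz unfolding S_def by simp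
  qed
  have notR: "\<not> cv R"
  proof
    assume cR: "cv R"
    have "(\<lambda>n. sA (Suc n) * R ^ Suc n) \<longlonglongrightarrow> 0"
      using cR unfolding cv_def by (auto intro: summable_LIMSEQ_zero)
    then have "eventually (\<lambda>n. sA (Suc n) * R ^ Suc n < pmin) sequentially"
      using pmin_pos by (intro order_tendstoD(2)) auto
    then obtain n where n: "sA (Suc n) * R ^ Suc n < pmin" by (auto simp: eventually_sequentially)
    have "sA (Suc n) < pmin * (1 / R) ^ Suc n" using n R1 by (simp add: field_simps power_divide)
    then obtain z where z: "z > 1 / (1 / R)" "cv z" using geomE[of "1/R" "Suc n"] R1 by auto
    have "z \<le> R" unfolding R_def using z bdd by (intro cSup_upper) (auto simp: S_def)
    then show False using z R1 by simp
  qed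
  let ?T = "\<lambda>n. sA (Suc n) * R ^ Suc n"
  have div: "eventually (\<lambda>z. M \<le> GS z) (at_left R)" for M
  proof -
    have nn: "\<And>n. 0 \<le> ?T n" using R1 sA_nonneg by simp
    obtain K where K: "M + 1 < sum ?T {..<K}"
    proof (rule ccontr)
      assume "\<not> thesis"
      then have "\<forall>K. sum ?T {..<K} \<le> M + 1" using that by (meson not_le)
      then have "summable ?T" by (intro summableI_nonneg_bounded[OF nn]) auto
      then show False using notR R1 unfolding cv_def by simp
    qed
    define PK where "PK z = (\<Sum>n<K. sA (Suc n) * z ^ Suc n)" for z
    have "(PK \<longlongrightarrow> PK R) (at_left R)" unfolding PK_def by (intro tendsto_intros)
    moreover have "M < PK R" using K unfolding PK_def by simp
    ultimately have e1: "eventually (\<lambda>z. M < PK z) (at_left R)" by (rule order_tendstoD(1))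
    have e2: "eventually (\<lambda>z. z \<in> {0<..<R}) (at_left R)" using R1 by (intro eventually_at_left_real) simp
    show ?thesis using e1 e2
    proof eventually_elim
      case (elim z)
      then have z: "0 < z" "z < R" and pk: "M < PK z" by auto
      have c: "cv z" using below z by simp
      have "PK z \<le> GS z" unfolding PK_def GS_def
        by (rule sum_le_suminf) (use c z sA_nonneg in \<open>auto simp: cv_def\<close>)
      then show ?case using pk by simp
    qed
  qed
  have f0: "(f_u N P u \<longlongrightarrow> 0) (at_left R)"
  proof (rule tendstoI)
    fix e :: real assume e: "e > 0"
    define K0 where "K0 = delta * R ^ r * (\<bar>DD R\<bar> + 1) * p (hd u)"
    have K0: "K0 \<ge> 0" unfolding K0_def using delta_pos p_pos[OF hd_u_lt] R1 by simp
    define d where "d = (R - 1) / 2"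
    have d: "d > 0" unfolding d_def using R1 by simp
    define M where "M = K0 / (e * d ^ 2) + 1"
    have ed: "e * d ^ 2 > 0" using e d by simp
    have q0: "K0 / (e * d ^ 2) \<ge> 0" using K0 ed by simp
    have M1: "M > 0" unfolding M_def using q0 by linarith
    have "e * (d ^ 2 * M) = (e * d ^ 2) * (K0 / (e * d ^ 2)) + e * d ^ 2" unfolding M_def by (simp add: algebra_simps)
    also have "(e * d ^ 2) * (K0 / (e * d ^ 2)) = K0"
    proof -
      have ne: "e * d ^ 2 \<noteq> 0" using ed by linarith
      show ?thesis by (simp only: times_divide_eq_right nonzero_mult_div_cancel_left[OF ne])
    qed
    finally have "e * (d ^ 2 * M) = K0 + e * d ^ 2" .
    then have M2: "K0 < e * (d ^ 2 * M)" using ed by simp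
    note M = M1 M2
    have eD: "eventually (\<lambda>z. \<bar>DD z\<bar> < \<bar>DD R\<bar> + 1) (at_left R)"
    proof -
      have "((\<lambda>z. \<bar>DD z\<bar>) \<longlongrightarrow> \<bar>DD R\<bar>) (at_left R)"
        using tendsto_mono[OF at_le[OF subset_UNIV] DD_isCont[unfolded isCont_def]] by (intro tendsto_rabs) simp
      then show ?thesis by (rule order_tendstoD(2)) simp
    qed
    have eZ: "eventually (\<lambda>z. z \<in> {(R + 1) / 2<..<R}) (at_left R)" using R1 by (intro eventually_at_left_real) simp
    show "eventually (\<lambda>z. dist (f_u N P u z) 0 < e) (at_left R)"
      using eD eZ div[of M]
    proof eventually_elim
      case (elim z)
      then have zD: "\<bar>DD z\<bar> < \<bar>DD R\<bar> + 1" and z: "(R + 1) / 2 < z" "z < R" and GS: "M \<le> GS z" by auto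
      have z0': "z > 0" "z > 1" using z R1 by auto
      have c: "cv z" using below z z0' by simp
      have zd: "z - 1 > d" unfolding d_def using z by simp
      have GT: "GT z = z + (z - 1) * GS z" using G3[OF c] by (simp add: algebra_simps)
      have GSpos: "GS z > 0" using GS M by simp
      have GTge: "GT z \<ge> (z - 1) * GS z" using GT z0' by simp
      have Q: "(z - 1) * GT z \<ge> d ^ 2 * M"
      proof -
        have "d ^ 2 * M \<le> (z - 1) ^ 2 * GS z"
          using zd d GS M by (intro mult_mono power_mono) auto
        also have "(z - 1) ^ 2 * GS z = (z - 1) * ((z - 1) * GS z)" by (simp add: power2_eq_square)
        also have "\<dots> \<le> (z - 1) * GT z" using GTge z0' by (intro mult_left_mono) auto
        finally show ?thesis .
      qed
      have eq: "\<bar>f_u N P u z\<bar> * ((z - 1) * GT z) = delta * z ^ r * \<bar>DD z\<bar> * p (hd u)"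
      proof -
        have "(1 - z) * GT z * f_u N P u z = delta * z ^ r * DD z * p (hd u)" by (rule A3[OF c])
        then have "\<bar>(1 - z) * GT z * f_u N P u z\<bar> = \<bar>delta * z ^ r * DD z * p (hd u)\<bar>" by simp
        moreover have "\<bar>(1 - z) * GT z * f_u N P u z\<bar> = \<bar>f_u N P u z\<bar> * ((z - 1) * GT z)"
        proof -
          have a1: "\<bar>1 - z\<bar> = z - 1" using z0' by simp
          have gp: "GT z > 0" using GTge z0' GSpos by (smt (verit) mult_pos_pos)
          then have a2: "\<bar>GT z\<bar> = GT z" by simp
          show ?thesis by (simp only: abs_mult a1 a2) (simp add: algebra_simps)
        qed
        moreover have "\<bar>delta * z ^ r * DD z * p (hd u)\<bar> = delta * z ^ r * \<bar>DD z\<bar> * p (hd u)"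
          using z0' delta_pos p_pos[OF hd_u_lt] by (simp add: abs_mult)
        ultimately show ?thesis by simp
      qed
      have "delta * z ^ r * \<bar>DD z\<bar> * p (hd u) \<le> K0"
        unfolding K0_def using delta_pos p_pos[OF hd_u_lt] z0' z zD
        by (intro mult_right_mono mult_mono power_mono mult_left_mono) auto
      then have le: "\<bar>f_u N P u z\<bar> * ((z - 1) * GT z) \<le> K0" using eq by simp
      show ?case
      proof (rule ccontr)
        assume "\<not> dist (f_u N P u z) 0 < e"
        then have fe: "\<bar>f_u N P u z\<bar> \<ge> e" by simp
        have "e * (d ^ 2 * M) \<le> \<bar>f_u N P u z\<bar> * ((z - 1) * GT z)"
          by (rule mult_mono[OF fe Q]) (use d M in auto)
        then show False using le M by simp
      qed
    qed
  qed
  have fR: "(f_u N P u \<longlongrightarrow> f_u N P u R) (at_left R)"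
    using tendsto_mono[OF at_le[OF subset_UNIV] f_cont[unfolded isCont_def]] by simp
  have "f_u N P u R = 0" using tendsto_unique[OF _ fR f0] by simp
  then have "z0 \<le> R" using least R1 by simp
  then show False using Rle z2 by simp
qed

lemma main:
  assumes z0: "z0 > 0" and root: "f_u N P u z0 = 0"
    and least: "\<And>z. z > 0 \<Longrightarrow> f_u N P u z = 0 \<Longrightarrow> z0 \<le> z"
  shows "(\<lambda>m. - ln (sA (m + r)) / real m) \<longlonglongrightarrow> ln z0"
proof (rule tendstoI)
  fix e :: real assume e: "e > 0"
  define z where "z = z0 * exp (- e / 2)"
  have zpos: "z > 0" unfolding z_def using z0 by simp
  have zlt: "z < z0" unfolding z_def using z0 e by simp
  have lnz: "ln z = ln z0 - e / 2" unfolding z_def using z0 by (simp add: ln_mult)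
  have c: "cv z" using upperU[OF z0 least] zpos zlt by simp
  have spos: "sA (m + r) > 0" for m
  proof -
    have "pmin * (1 / z0) ^ (m + r) \<le> sA (m + r)" using lowerL[OF z0 root] r_ge2 by simp
    moreover have "pmin * (1 / z0) ^ (m + r) > 0" using pmin_pos z0 by simp
    ultimately show ?thesis by simp
  qed
  have E1: "eventually (\<lambda>m::nat. m > 0) sequentially" by (simp add: eventually_gt_at_top)
  have E2: "eventually (\<lambda>m::nat. ln z0 - e < ln z + real r * ln z / real m) sequentially"
  proof -
    have "(\<lambda>m::nat. ln z + real r * ln z / real m) \<longlonglongrightarrow> ln z + 0" by (intro tendsto_intros)
    then show ?thesis using lnz e by (intro order_tendstoD(1)) auto
  qed
  have E3: "eventually (\<lambda>m::nat. sA (m + r) * z ^ (m + r) \<le> 1) sequentially"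
  proof -
    have "(\<lambda>n. sA (Suc n) * z ^ Suc n) \<longlonglongrightarrow> 0" using c unfolding cv_def by (auto intro: summable_LIMSEQ_zero)
    then have "eventually (\<lambda>n. sA (Suc n) * z ^ Suc n < 1) sequentially" by (intro order_tendstoD(2)) auto
    then obtain n0 where n0: "\<And>n. n \<ge> n0 \<Longrightarrow> sA (Suc n) * z ^ Suc n < 1" by (auto simp: eventually_sequentially)
    show ?thesis unfolding eventually_sequentially
    proof (intro exI allI impI)
      fix m assume "n0 \<le> m"
      then have "n0 \<le> m + r - 1" using r_ge2 by simp
      moreover have "Suc (m + r - 1) = m + r" using r_ge2 by simp
      ultimately show "sA (m + r) * z ^ (m + r) \<le> 1" using n0[of "m + r - 1"] by simp
    qed
  qed
  have E4: "eventually (\<lambda>m::nat. ln z0 + (real r * ln z0 - ln pmin) / real m < ln z0 + e) sequentially"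
  proof -
    have "(\<lambda>m::nat. ln z0 + (real r * ln z0 - ln pmin) / real m) \<longlonglongrightarrow> ln z0 + 0" by (intro tendsto_intros)
    then show ?thesis using e by (intro order_tendstoD(2)) auto
  qed
  show "eventually (\<lambda>m. dist (- ln (sA (m + r)) / real m) (ln z0) < e) sequentially"
    using E1 E2 E3 E4
  proof eventually_elim
    case (elim m)
    then have m: "m > 0" and e2: "ln z0 - e < ln z + real r * ln z / real m"
      and e3: "sA (m + r) * z ^ (m + r) \<le> 1" and e4: "ln z0 + (real r * ln z0 - ln pmin) / real m < ln z0 + e" by auto
    let ?s = "sA (m + r)"
    have sp: "?s > 0" by (rule spos)
    have "ln (?s * z ^ (m + r)) \<le> 0" using e3 sp zpos by (subst ln_le_zero_iff) auto
    then have l1: "ln ?s + real (m + r) * ln z \<le> 0" using sp zpos by (simp add: ln_mult ln_realpow)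
    have "pmin * (1 / z0) ^ (m + r) \<le> ?s" using lowerL[OF z0 root] r_ge2 by simp
    then have "ln (pmin * (1 / z0) ^ (m + r)) \<le> ln ?s" using pmin_pos z0 sp by (subst ln_le_cancel_iff) auto
    then have l2: "ln pmin - real (m + r) * ln z0 \<le> ln ?s" using pmin_pos z0 by (simp add: ln_mult ln_realpow ln_div)
    have mpos: "real m > 0" using m by simp
    have lo: "ln z + real r * ln z / real m \<le> - ln ?s / real m"
    proof -
      have "ln z + real r * ln z / real m = real (m + r) * ln z / real m" using mpos by (simp add: field_simps)
      also have "\<dots> \<le> - ln ?s / real m" using l1 mpos by (intro divide_right_mono) auto
      finally show ?thesis .
    qed
    have hi: "- ln ?s / real m \<le> ln z0 + (real r * ln z0 - ln pmin) / real m"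
    proof -
      have "- ln ?s / real m \<le> (real (m + r) * ln z0 - ln pmin) / real m" using l2 mpos by (intro divide_right_mono) auto
      also have "\<dots> = ln z0 + (real r * ln z0 - ln pmin) / real m" using mpos by (simp add: field_simps)
      finally show ?thesis .
    qed
    show ?case using lo hi e2 e4 by (simp add: dist_real_def abs_less_iff)
  qed
qed

end

theorem theorem4p10:
  fixes N :: nat and A P :: "real mat" and p :: "nat \<Rightarrow> real"
    and u :: "nat list" and z0 :: real
  assumes A01: "zero_one_mat N A"
    and Airr: "irreducible_mat N A"
    and Pst: "row_stochastic_compatible N A P"
    and pst: "stationary_vector N P p"
    and u_states: "set u \<subseteq> {..<N}"
    and u_allowed: "allowed N A u"
    and u_len: "length u \<ge> 2"
    and z0_pos: "z0 > 0"
    and z0_root: "f_u N P u z0 = 0"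
    and z0_least: "\<And>z. z > 0 \<Longrightarrow> f_u N P u z = 0 \<Longrightarrow> z0 \<le> z"
  shows "(\<lambda>m. - ln (markov_measure_lvl N A p P (m + length u)
                      (survivors N A (cyl N A u) m)) / real m)
         \<longlonglongrightarrow> ln z0"
proof -
  interpret hs N A P p u using A01 Airr Pst pst u_states u_allowed u_len by unfold_locales
  have "markov_measure_lvl N A p P (m + length u) (survivors N A (cyl N A u) m) = sA (m + length u)" for m
    by (rule measure_eq)
  then show ?thesis using main[OF z0_pos z0_root z0_least] by simp
qed

end
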